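(* A graph in the family $\mathcal{C}$ is word-representable if and only if it belongs to $\mathcal{C}_3$. That is, $F_0$, every even $k$-sun ($k\ge4$ even), and every $F_1(k)$ and $F_2(k)$ ($k\ge5$ odd) are word-representable, while every odd $k$-sun with center ($k\ge3$ odd), $K_1\vee\text{tent}$, $M_{\rm II}(k)$ ($k\ge4$ even), $M_{\rm III}(3)$, $M_{\rm III}(k)$ ($k\ge4$ even), $M_{\rm IV}$ and $M_{\rm V}$ are not.
   Context: All graphs below are split graphs given by a clique $C$ and independent set $I$ with the listed neighbourhoods of vertices of $I$. Odd $k$-sun with center ($k\ge3$ odd): $C=\{c,c_1,\dots,c_k\}$, $I=\{a_1,\dots,a_k\}$, $N(a_i)=\{c_i,c_{i+1}\}$ ($1\le i\le k-1$), $N(a_k)=\{c_1,c_k\}$. Tent: $C=\{x_1,x_2,x_3\}$, $I=\{y_1,y_2,y_3\}$, $N(y_1)=\{x_1,x_2\}$, $N(y_2)=\{x_2,x_3\}$, $N(y_3)=\{x_1,x_3\}$; $K_1\vee\text{tent}$ is the tent plus a vertex adjacent to all six vertices. Even $k$-sun ($k\ge4$ even): $C=\{c_1,\dots,c_k\}$, $I=\{a_1,\dots,a_k\}$, $N(a_i)=\{c_i,c_{i+1}\}$ ($1\le i\le k-1$), $N(a_k)=\{c_1,c_k\}$. $M_{\rm II}(k)$ ($k\ge4$ even): $C=\{c_1,\dots,c_k\}$, $I=\{b_1,b_2,a_1,\dots,a_{k-2}\}$, $N(b_1)=\{c_1,\dots,c_{k-2},c_k\}$, $N(b_2)=\{c_2,\dots,c_k\}$,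 $N(a_i)=\{c_i,c_{i+1}\}$ ($1\le i\le k-2$). $M_{\rm III}(3)$: the net (triangle $x_1x_2x_3$ plus vertices $y_1,y_2,y_3$ with $y_i$ adjacent only to $x_i$) plus a vertex adjacent to all six vertices. $M_{\rm III}(k)$ ($k\ge4$ even): $C=\{c_1,\dots,c_{k+1}\}$, $I=\{b,a_1,\dots,a_{k-1}\}$, $N(b)=\{c_2,\dots,c_{k-1},c_{k+1}\}$, $N(a_i)=\{c_i,c_{i+1}\}$ ($1\le i\le k-1$). $M_{\rm IV}$: $C=\{c_1,\dots,c_6\}$, $I=\{a_1,\dots,a_4\}$, $N(a_1)=\{c_1,c_2\}$, $N(a_2)=\{c_3,c_4\}$, $N(a_3)=\{c_5,c_6\}$, $N(a_4)=\{c_2,c_4,c_6\}$. $M_{\rm V}$: $C=\{c_1,\dots,c_5\}$, $I=\{a_1,\dots,a_4\}$, $N(a_1)=\{c_1,c_2\}$, $N(a_2)=\{c_3,c_4\}$, $N(a_3)=\{c_1,c_4,c_5\}$, $N(a_4)=\{c_1,c_2,c_3,c_4\}$. $F_0$: $C=\{0,c_1,c_2,c_3,c_4\}$, $I=\{a_1,a_2,a_3\}$, $N(a_1)=\{0,c_2,c_3\}$, $N(a_2)=\{0,c_3,c_4\}$, $N(a_3)=\{0,c_1,c_4\}$. $F_1(k)$ ($k\ge5$ odd): $C=\{c_1,\dots,c_{k-1}\}$, $I=\{b_1,b_2,a_1,\dots,a_{k-2}\}$, $N(b_1)=\{c_1,\dots,c_{k-2}\}$, $N(b_2)=\{c_2,\dots,c_{k-1}\}$,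 $N(a_i)=\{c_i,c_{i+1}\}$ ($1\le i\le k-2$). $F_2(k)$ ($k\ge5$ odd): $C=\{c_1,\dots,c_k\}$, $I=\{b,a_1,\dots,a_{k-1}\}$, $N(b)=\{c_2,\dots,c_{k-1}\}$, $N(a_i)=\{c_i,c_{i+1}\}$ ($1\le i\le k-1$). $\mathcal{C}$ is the family consisting of all of the graphs listed above; $\mathcal{C}_3\subseteq\mathcal{C}$ consists of $F_0$, the even $k$-suns ($k\ge4$ even), and $F_1(k)$, $F_2(k)$ ($k\ge5$ odd). A graph $G=(V,E)$ is word-representable if there is a word $w$ over $V$ such that for all distinct $a,b\in V$, $ab\in E$ iff $a$ and $b$ alternate in $w$ (i.e. the subsequence of $w$ formed by all occurrences of $a$ and $b$ is $abab\cdots$ or $baba\cdots$). *)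

theory Defs
  imports Main
begin

type_synonym 'v graph = "'v set \<times> ('v \<Rightarrow> 'v \<Rightarrow> bool)"

definition alternate :: "'v list \<Rightarrow> 'v \<Rightarrow> 'v \<Rightarrow> bool" where
  "alternate w a b \<longleftrightarrow>
     (let s = filter (\<lambda>c. c = a \<or> c = b) w in
       (\<forall>i<length s. s ! i = (if even i then a else b)) \<or>
       (\<forall>i<length s. s ! i = (if even i then b else a)))"

definition word_representable :: "'v graph \<Rightarrow> bool" where
  "word_representable G \<longleftrightarrow>
     (\<exists>w. set w = fst G \<and>
        (\<forall>a\<in>fst G. \<forall>b\<in>fst G. a \<noteq> b \<longrightarrow> (snd G a b \<longleftrightarrow> alternate w a b)))"

text \<open>Split graph with clique vertices Inl c (c \<in> C), independent vertices Inr i (i \<in> I),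
  and N i the (clique) neighbourhood of Inr i.\<close>
definition split_graph :: "nat set \<Rightarrow> nat set \<Rightarrow> (nat \<Rightarrow> nat set) \<Rightarrow> (nat + nat) graph" where
  "split_graph C I N =
    (Inl ` C \<union> Inr ` I,
     \<lambda>u v. u \<in> Inl ` C \<union> Inr ` I \<and> v \<in> Inl ` C \<union> Inr ` I \<and> u \<noteq> v \<and>
       (case (u, v) of
          (Inl _, Inl _) \<Rightarrow> True
        | (Inl c, Inr i) \<Rightarrow> c \<in> N i
        | (Inr i, Inl c) \<Rightarrow> c \<in> N i
        | (Inr _, Inr _) \<Rightarrow> False))"

text \<open>Cycle neighbourhoods: a_i ~ {c_i, c_(i+1)} for i < k, a_k ~ {c_1, c_k}.\<close>
definition sun_nbr :: "nat \<Rightarrow> nat \<Rightarrow> nat set" where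
  "sun_nbr k i = (if i < k then {i, i+1} else {1, k})"

text \<open>Odd k-sun with center: the center c is Inl 0, c_i = Inl i, a_i = Inr i.\<close>
definition odd_sun_center :: "nat \<Rightarrow> (nat + nat) graph" where
  "odd_sun_center k = split_graph {0..k} {1..k} (sun_nbr k)"

text \<open>K_1 join tent: x_i = Inl i, the extra vertex is Inl 4, y_i = Inr i.\<close>
definition K1_tent :: "(nat + nat) graph" where
  "K1_tent = split_graph {1..4} {1..3}
     (\<lambda>i. if i = 1 then {1,2,4} else if i = 2 then {2,3,4} else {1,3,4})"

definition even_sun :: "nat \<Rightarrow> (nat + nat) graph" where
  "even_sun k = split_graph {1..k} {1..k} (sun_nbr k)"

text \<open>M_II(k): a_i = Inr i (i \<le> k-2), b_1 = Inr (k-1), b_2 = Inr k.\<close>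
definition M_II :: "nat \<Rightarrow> (nat + nat) graph" where
  "M_II k = split_graph {1..k} {1..k}
     (\<lambda>i. if i \<le> k - 2 then {i, i+1}
          else if i = k - 1 then {1..k-2} \<union> {k} else {2..k})"

text \<open>M_III(3): net triangle x_i = Inl i, universal vertex Inl 4, y_i = Inr i.\<close>
definition M_III3 :: "(nat + nat) graph" where
  "M_III3 = split_graph {1..4} {1..3} (\<lambda>i. {i, 4})"

text \<open>M_III(k), k even: a_i = Inr i (i \<le> k-1), b = Inr k.\<close>
definition M_III :: "nat \<Rightarrow> (nat + nat) graph" where
  "M_III k = split_graph {1..k+1} {1..k}
     (\<lambda>i. if i \<le> k - 1 then {i, i+1} else {2..k-1} \<union> {k+1})"

definition M_IV :: "(nat + nat) graph" where
  "M_IV = split_graph {1..6} {1..4}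
     (\<lambda>i. if i = 1 then {1,2} else if i = 2 then {3,4} else if i = 3 then {5,6} else {2,4,6})"

definition M_V :: "(nat + nat) graph" where
  "M_V = split_graph {1..5} {1..4}
     (\<lambda>i. if i = 1 then {1,2} else if i = 2 then {3,4} else if i = 3 then {1,4,5} else {1,2,3,4})"

text \<open>F_0: the clique vertex 0 is Inl 0.\<close>
definition F0 :: "(nat + nat) graph" where
  "F0 = split_graph {0..4} {1..3}
     (\<lambda>i. if i = 1 then {0,2,3} else if i = 2 then {0,3,4} else {0,1,4})"

text \<open>F_1(k): a_i = Inr i (i \<le> k-2), b_1 = Inr (k-1), b_2 = Inr k.\<close>
definition F1 :: "nat \<Rightarrow> (nat + nat) graph" where
  "F1 k = split_graph {1..k-1} {1..k}
     (\<lambda>i. if i \<le> k - 2 then {i, i+1}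
          else if i = k - 1 then {1..k-2} else {2..k-1})"

text \<open>F_2(k): a_i = Inr i (i \<le> k-1), b = Inr k.\<close>
definition F2 :: "nat \<Rightarrow> (nat + nat) graph" where
  "F2 k = split_graph {1..k} {1..k}
     (\<lambda>i. if i \<le> k - 1 then {i, i+1} else {2..k-1})"

end

theory Submission
  imports Defs "HOL-Library.Multiset"
begin

definition cnt :: "'v list \<Rightarrow> 'v \<Rightarrow> nat \<Rightarrow> nat" where
  "cnt w x j = count_list (take j w) x"

definition bef :: "'v list \<Rightarrow> 'v \<Rightarrow> 'v \<Rightarrow> bool" where
  "bef w x y \<longleftrightarrow> (\<forall>j. cnt w y j \<le> cnt w x j \<and> cnt w x j \<le> cnt w y j + 1)"

definition patt :: "'v list \<Rightarrow> 'v \<Rightarrow> 'v \<Rightarrow> bool" where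
  "patt s x y \<longleftrightarrow> (\<forall>i<length s. s ! i = (if even i then x else y))"

lemma patt_snoc: "patt (s @ [c]) x y \<longleftrightarrow> patt s x y \<and> c = (if even (length s) then x else y)"
  unfolding patt_def
  apply (auto simp: nth_append less_Suc_eq)
  done

lemma len_filter2: "x \<noteq> y \<Longrightarrow> length (filter (\<lambda>c. c = x \<or> c = y) w) = count_list w x + count_list w y"
  by (induction w) auto

lemma bef_snoc: "bef (w @ [c]) x y \<longleftrightarrow> bef w x y \<and>
   count_list (w@[c]) y \<le> count_list (w@[c]) x \<and> count_list (w@[c]) x \<le> count_list (w@[c]) y + 1"
proof
  assume H: "bef (w @ [c]) x y"
  have "bef w x y" unfolding bef_def
  proof
    fix j
    show "cnt w y j \<le> cnt w x j \<and> cnt w x j \<le> cnt w y j + 1"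
    proof (cases "j \<le> length w")
      case True
      then have "take j (w @ [c]) = take j w" by simp
      then show ?thesis using H unfolding bef_def cnt_def by metis
    next
      case False
      then have "take j w = take (length w) (w @ [c])" by simp
      then show ?thesis using H unfolding bef_def cnt_def by metis
    qed
  qed
  moreover have "take (Suc (length w)) (w @ [c]) = w @ [c]" by simp
  ultimately show "bef w x y \<and>
   count_list (w@[c]) y \<le> count_list (w@[c]) x \<and> count_list (w@[c]) x \<le> count_list (w@[c]) y + 1"
    using H unfolding bef_def cnt_def by metis
next
  assume H: "bef w x y \<and>
   count_list (w@[c]) y \<le> count_list (w@[c]) x \<and> count_list (w@[c]) x \<le> count_list (w@[c]) y + 1"
  show "bef (w @ [c]) x y" unfolding bef_def
  proof
    fix j
    show "cnt (w @ [c]) y j \<le> cnt (w @ [c]) x j \<and> cnt (w @ [c]) x j \<le> cnt (w @ [c]) y j + 1"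
    proof (cases "j \<le> length w")
      case True
      then have "take j (w @ [c]) = take j w" by simp
      then show ?thesis using H unfolding bef_def cnt_def by metis
    next
      case False
      then have "take j (w @ [c]) = w @ [c]" by simp
      then show ?thesis using H unfolding bef_def cnt_def by metis
    qed
  qed
qed

lemma patt_bef:
  assumes "x \<noteq> y"
  shows "patt (filter (\<lambda>c. c = x \<or> c = y) w) x y \<longleftrightarrow> bef w x y"
proof (induction w rule: rev_induct)
  case Nil
  then show ?case by (simp add: patt_def bef_def cnt_def)
next
  case (snoc c w)
  let ?s = "filter (\<lambda>c. c = x \<or> c = y) w"
  have L: "length ?s = count_list w x + count_list w y" using len_filter2[OF assms] .
  show ?case
  proof (cases "bef w x y")
    case False
    have "\<not> patt (filter (\<lambda>c. c = x \<or> c = y) (w @ [c])) x y"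
      using snoc False by (cases "c = x \<or> c = y") (auto simp: patt_snoc)
    then show ?thesis using bef_snoc[of w c x y] False by auto
  next
    case True
    then have B: "count_list w y \<le> count_list w x \<and> count_list w x \<le> count_list w y + 1"
      unfolding bef_def cnt_def by (metis order_refl take_all)
    have "patt (filter (\<lambda>c. c = x \<or> c = y) (w @ [c])) x y \<longleftrightarrow>
          patt ?s x y \<and> (c = x \<or> c = y \<longrightarrow> c = (if even (length ?s) then x else y))"
      by (cases "c = x \<or> c = y") (auto simp: patt_snoc)
    also have "\<dots> \<longleftrightarrow> bef (w @ [c]) x y"
      using snoc True B L assms unfolding bef_snoc by (auto; presburger)
    finally show ?thesis .
  qed
qed

lemma alt_bef: "x \<noteq> y \<Longrightarrow> alternate w x y \<longleftrightarrow> bef w x y \<or> bef w y x"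
proof -
  assume xy: "x \<noteq> y"
  have e: "filter (\<lambda>c. c = x \<or> c = y) w = filter (\<lambda>c. c = y \<or> c = x) w"
    by (metis disj_commute)
  show ?thesis
    unfolding alternate_def Let_def
    using patt_bef[OF xy, of w] patt_bef[of y x w] xy e unfolding patt_def by auto
qed

definition trip :: "('v \<Rightarrow> nat \<Rightarrow> int) \<Rightarrow> 'v \<Rightarrow> (int \<times> 'v) list" where
  "trip p v = [(p v 0, v), (p v 1, v), (p v 2, v)]"

definition wpos :: "'v list \<Rightarrow> ('v \<Rightarrow> nat \<Rightarrow> int) \<Rightarrow> 'v list" where
  "wpos vs p = map snd (sort_key fst (concat (map (trip p) vs)))"

definition C3 :: "(nat \<Rightarrow> int) \<Rightarrow> int \<Rightarrow> nat" where
  "C3 q \<theta> = (if q 0 < \<theta> then 1 else 0) + (if q 1 < \<theta> then 1 else 0) + (if q 2 < \<theta> then 1 else 0)"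

definition inter :: "(nat \<Rightarrow> int) \<Rightarrow> (nat \<Rightarrow> int) \<Rightarrow> bool" where
  "inter p q \<longleftrightarrow> p 0 < q 0 \<and> q 0 < p 1 \<and> p 1 < q 1 \<and> q 1 < p 2 \<and> p 2 < q 2"

lemma take_filter_ex:
  "sorted_wrt (<) (map fst (s :: (int \<times> 'v) list)) \<Longrightarrow> \<exists>\<theta>. take j s = filter (\<lambda>q. fst q < \<theta>) s"
proof (induction s arbitrary: j)
  case Nil
  then show ?case by simp
next
  case (Cons a s)
  show ?case
  proof (cases j)
    case 0
    have "filter (\<lambda>q. fst q < fst a) (a # s) = []"
      using Cons.prems by (auto simp: filter_empty_conv)
    then show ?thesis using 0 by (metis take0)
  next
    case (Suc j')
    obtain \<theta>' where th: "take j' s = filter (\<lambda>q. fst q < \<theta>') s" using Cons by auto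
    show ?thesis
    proof (cases "\<theta>' \<le> fst a")
      case True
      have "filter (\<lambda>q. fst q < \<theta>') s = []" using Cons.prems True by (auto simp: filter_empty_conv)
      moreover have "filter (\<lambda>q. fst q < fst a + 1) (a # s) = [a]"
        using Cons.prems by (auto simp: filter_empty_conv)
      ultimately show ?thesis using th Suc by (metis take_Suc_Cons)
    next
      case False
      have "filter (\<lambda>q. fst q < \<theta>') (a # s) = a # filter (\<lambda>q. fst q < \<theta>') s" using False by simp
      then show ?thesis using th Suc by (metis take_Suc_Cons)
    qed
  qed
qed

lemma filter_take_ex:
  "sorted_wrt (<) (map fst (s :: (int \<times> 'v) list)) \<Longrightarrow> \<exists>j. take j s = filter (\<lambda>q. fst q < \<theta>) s"
proof (induction s)
  case Nil
  then show ?case by simp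
next
  case (Cons a s)
  show ?case
  proof (cases "fst a < \<theta>")
    case True
    then obtain j where "take j s = filter (\<lambda>q. fst q < \<theta>) s" using Cons by auto
    then have "take (Suc j) (a # s) = filter (\<lambda>q. fst q < \<theta>) (a # s)" using True by simp
    then show ?thesis by blast
  next
    case False
    have "filter (\<lambda>q. fst q < \<theta>) (a # s) = []" using Cons.prems False by (auto simp: filter_empty_conv)
    then show ?thesis by (metis take0)
  qed
qed

lemma count_map_snd: "count_list (map snd xs) y = length (filter (\<lambda>q. snd q = y) xs)"
  by (induction xs) auto

lemma count_trip: "length (filter (\<lambda>q. snd q = y) (filter (\<lambda>q. fst q < \<theta>) (trip p v))) = (if v = y then C3 (p y) \<theta> else 0)"
  by (simp add: trip_def C3_def)

lemma count_L:
  assumes "distinct vs" "y \<in> set vs"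
  shows "length (filter (\<lambda>q. snd q = y) (filter (\<lambda>q. fst q < \<theta>) (concat (map (trip p) vs)))) = C3 (p y) \<theta>"
  using assms
proof (induction vs)
  case Nil
  then show ?case by simp
next
  case (Cons v vs)
  have e: "length (filter (\<lambda>q. snd q = y) (filter (\<lambda>q. fst q < \<theta>) (concat (map (trip p) (v#vs))))) =
     length (filter (\<lambda>q. snd q = y) (filter (\<lambda>q. fst q < \<theta>) (trip p v))) +
     length (filter (\<lambda>q. snd q = y) (filter (\<lambda>q. fst q < \<theta>) (concat (map (trip p) vs))))"
    by (simp only: concat.simps list.map filter_append length_append)
  show ?case
  proof (cases "v = y")
    case True
    then have "y \<notin> set vs" using Cons by auto
    then have "filter (\<lambda>q. snd q = y) (filter (\<lambda>q. fst q < \<theta>) (concat (map (trip p) vs))) = []"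
      by (auto simp: filter_empty_conv trip_def)
    moreover have "length (filter (\<lambda>q. snd q = y) (filter (\<lambda>q. fst q < \<theta>) (trip p v))) = C3 (p y) \<theta>"
      using count_trip[of y \<theta> p v] True by presburger
    ultimately show ?thesis using e by (metis add.right_neutral list.size(3))
  next
    case False
    have "length (filter (\<lambda>q. snd q = y) (filter (\<lambda>q. fst q < \<theta>) (trip p v))) = 0"
      using count_trip[of y \<theta> p v] False by presburger
    moreover have "y \<in> set vs" "distinct vs" using Cons.prems False by auto
    ultimately show ?thesis using e Cons.IH by simp
  qed
qed

lemma sorted_strict_L:
  assumes "distinct (map fst L)"
  shows "sorted_wrt (<) (map fst (sort_key fst (L :: (int \<times> 'v) list)))"
proof -
  have "mset (map fst (sort_key fst L)) = mset (map fst L)" by simp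
  then have "distinct (map fst (sort_key fst L))" using assms
    by (metis mset_eq_imp_distinct_iff)
  moreover have "sorted (map fst (sort_key fst L))" by simp
  ultimately show ?thesis by (simp add: strict_sorted_iff)
qed

lemma cnt_wpos:
  assumes "distinct vs" "distinct (map fst (concat (map (trip p) vs)))"
  shows "(\<forall>j. \<exists>\<theta>. \<forall>y\<in>set vs. cnt (wpos vs p) y j = C3 (p y) \<theta>) \<and>
         (\<forall>\<theta>. \<exists>j. \<forall>y\<in>set vs. cnt (wpos vs p) y j = C3 (p y) \<theta>)"
proof -
  define L where "L = concat (map (trip p) vs)"
  define s where "s = sort_key fst L"
  have ss: "sorted_wrt (<) (map fst s)" unfolding s_def using sorted_strict_L assms(2) L_def by blast
  have key: "cnt (wpos vs p) y j = C3 (p y) \<theta>"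
    if "take j s = filter (\<lambda>q. fst q < \<theta>) s" "y \<in> set vs" for j \<theta> y
  proof -
    have "cnt (wpos vs p) y j = count_list (map snd (take j s)) y"
      unfolding cnt_def wpos_def s_def L_def by (simp add: take_map)
    also have "\<dots> = length (filter (\<lambda>q. snd q = y) (filter (\<lambda>q. fst q < \<theta>) s))"
      using that(1) count_map_snd by metis
    also have "\<dots> = length (filter (\<lambda>q. snd q = y) (filter (\<lambda>q. fst q < \<theta>) L))"
      unfolding s_def by (simp add: filter_sort)
    also have "\<dots> = C3 (p y) \<theta>" unfolding L_def by (rule count_L[OF assms(1) that(2)])
    finally show ?thesis .
  qed
  show ?thesis
    using key take_filter_ex[OF ss] filter_take_ex[OF ss] by metis
qed

lemma bef_wpos:
  assumes "distinct vs" "distinct (map fst (concat (map (trip p) vs)))" "x \<in> set vs" "y \<in> set vs"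
  shows "bef (wpos vs p) x y \<longleftrightarrow> (\<forall>\<theta>. C3 (p y) \<theta> \<le> C3 (p x) \<theta> \<and> C3 (p x) \<theta> \<le> C3 (p y) \<theta> + 1)"
  using cnt_wpos[OF assms(1,2)] assms(3,4) unfolding bef_def by metis

lemma C3_inter:
  assumes "p 0 < p 1" "p 1 < p 2" "q 0 < q 1" "q 1 < q 2"
    and "\<forall>s<3. \<forall>t<3. p s \<noteq> q t"
  shows "(\<forall>\<theta>. C3 q \<theta> \<le> C3 p \<theta> \<and> C3 p \<theta> \<le> C3 q \<theta> + 1) \<longleftrightarrow> inter p q"
proof
  assume H: "\<forall>\<theta>. C3 q \<theta> \<le> C3 p \<theta> \<and> C3 p \<theta> \<le> C3 q \<theta> + 1"
  have d: "p s \<noteq> q t" if "s < 3" "t < 3" for s t using assms(5) that by blast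
  have d00: "p 0 \<noteq> q 0" and d01: "p 0 \<noteq> q 1" and d02: "p 0 \<noteq> q 2"
   and d10: "p 1 \<noteq> q 0" and d11: "p 1 \<noteq> q 1" and d12: "p 1 \<noteq> q 2"
   and d20: "p 2 \<noteq> q 0" and d21: "p 2 \<noteq> q 1" and d22: "p 2 \<noteq> q 2" using d by auto
  have h1: "C3 q (p 0) \<le> C3 p (p 0)" and h2: "C3 q (q 0 + 1) \<le> C3 p (q 0 + 1)"
   and h3: "C3 q (p 1) \<le> C3 p (p 1)" and h4: "C3 q (q 1 + 1) \<le> C3 p (q 1 + 1)"
   and h5: "C3 q (p 2) \<le> C3 p (p 2)"
   and g1: "C3 p (q 0) \<le> C3 q (q 0) + 1" and g2: "C3 p (p 1 + 1) \<le> C3 q (p 1 + 1) + 1"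
   and g3: "C3 p (q 1) \<le> C3 q (q 1) + 1" and g4: "C3 p (p 2 + 1) \<le> C3 q (p 2 + 1) + 1"
   and g5: "C3 p (q 2) \<le> C3 q (q 2) + 1"
    using H by auto
  show "inter p q"
    using h1 h2 h3 h4 h5 g1 g2 g3 g4 g5 assms(1-4) d00 d01 d02 d10 d11 d12 d20 d21 d22
    unfolding inter_def C3_def by (auto split: if_splits)
next
  assume "inter p q"
  then show "\<forall>\<theta>. C3 q \<theta> \<le> C3 p \<theta> \<and> C3 p \<theta> \<le> C3 q \<theta> + 1"
    using assms unfolding inter_def C3_def by auto
qed

lemma distinct_keys:
  assumes "distinct vs"
    and "\<forall>v\<in>set vs. p v 0 < p v 1 \<and> p v 1 < p v 2"
    and "\<forall>x\<in>set vs. \<forall>y\<in>set vs. x \<noteq> y \<longrightarrow> (\<forall>s<3. \<forall>t<3. p x s \<noteq> p y t)"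
  shows "distinct (map fst (concat (map (trip p) vs)))"
  using assms
proof (induction vs)
  case Nil
  then show ?case by simp
next
  case (Cons v vs)
  have IH: "distinct (map fst (concat (map (trip p) vs)))" using Cons by auto
  have S: "set (map fst (concat (map (trip p) vs))) = (\<Union>u\<in>set vs. {p u 0, p u 1, p u 2})"
    by (auto simp: trip_def image_iff)
  have "p v s \<noteq> p u t" if "u \<in> set vs" "s < 3" "t < 3" for u s t
    using Cons.prems that by (metis list.set_intros(1) list.set_intros(2) distinct.simps(2))
  then have "p v s \<notin> set (map fst (concat (map (trip p) vs)))" if "s < 3" for s
    unfolding S using that by auto
  then have D: "p v 0 \<notin> set (map fst (concat (map (trip p) vs)))"
    "p v 1 \<notin> set (map fst (concat (map (trip p) vs)))"
    "p v 2 \<notin> set (map fst (concat (map (trip p) vs)))" by auto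
  have M: "p v 0 < p v 1" "p v 1 < p v 2" using Cons.prems by auto
  show ?case using IH D M by (simp add: trip_def[of p v])
qed

lemma set_wpos: "set (wpos vs p) = set vs"
  unfolding wpos_def by (force simp: trip_def)

lemma wr_pos:
  fixes vs :: "'v list" and p :: "'v \<Rightarrow> nat \<Rightarrow> int"
  assumes "distinct vs"
    and mono: "\<forall>v\<in>set vs. p v 0 < p v 1 \<and> p v 1 < p v 2"
    and disj: "\<forall>x\<in>set vs. \<forall>y\<in>set vs. x \<noteq> y \<longrightarrow> (\<forall>s<3. \<forall>t<3. p x s \<noteq> p y t)"
    and adj: "\<forall>x\<in>set vs. \<forall>y\<in>set vs. x \<noteq> y \<longrightarrow> (E x y \<longleftrightarrow> inter (p x) (p y) \<or> inter (p y) (p x))"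
  shows "word_representable (set vs, E)"
proof -
  have dk: "distinct (map fst (concat (map (trip p) vs)))" using distinct_keys assms(1-3) by blast
  have "alternate (wpos vs p) a b \<longleftrightarrow> E a b" if "a \<in> set vs" "b \<in> set vs" "a \<noteq> b" for a b
  proof -
    have d1: "\<forall>s<3. \<forall>t<3. p a s \<noteq> p b t" and d2: "\<forall>s<3. \<forall>t<3. p b s \<noteq> p a t"
      using disj that by auto
    have "alternate (wpos vs p) a b \<longleftrightarrow> bef (wpos vs p) a b \<or> bef (wpos vs p) b a"
      by (rule alt_bef[OF that(3)])
    also have "\<dots> \<longleftrightarrow> inter (p a) (p b) \<or> inter (p b) (p a)"
    proof -
      have ma: "p a 0 < p a 1" "p a 1 < p a 2" using mono that(1) by auto
      have mb: "p b 0 < p b 1" "p b 1 < p b 2" using mono that(2) by auto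
      have e1: "bef (wpos vs p) a b \<longleftrightarrow> inter (p a) (p b)"
        using bef_wpos[OF assms(1) dk that(1,2)] C3_inter[OF ma mb d1] by simp
      have e2: "bef (wpos vs p) b a \<longleftrightarrow> inter (p b) (p a)"
        using bef_wpos[OF assms(1) dk that(2,1)] C3_inter[OF mb ma d2] by simp
      show ?thesis using e1 e2 by simp
    qed
    finally show ?thesis using adj that by auto
  qed
  then show ?thesis unfolding word_representable_def using set_wpos by (metis fst_conv snd_conv)
qed

lemma all_pairs_split:
  assumes "\<forall>j\<in>A. \<forall>j'\<in>A. j \<noteq> j' \<longrightarrow> Q (Inl j) (Inl j')"
    and "\<forall>i\<in>B. \<forall>j\<in>A. Q (Inr i) (Inl j) \<and> Q (Inl j) (Inr i)"
    and "\<forall>i\<in>B. \<forall>i'\<in>B. i \<noteq> i' \<longrightarrow> Q (Inr i) (Inr i')"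
  shows "\<forall>x\<in>Inl ` A \<union> Inr ` B. \<forall>y\<in>Inl ` A \<union> Inr ` B. x \<noteq> y \<longrightarrow> Q x y"
  using assms by auto

definition tri :: "int \<Rightarrow> int \<Rightarrow> int \<Rightarrow> nat \<Rightarrow> int" where
  "tri a b c t = (if t = 0 then a else if t = 1 then b else c)"

lemma tri_simps[simp]: "tri a b c 0 = a" "tri a b c 1 = b" "tri a b c 2 = c"
   "tri a b c (Suc 0) = b" "tri a b c (Suc (Suc 0)) = c"
  by (auto simp: tri_def)

definition disj3 :: "(nat \<Rightarrow> int) \<Rightarrow> (nat \<Rightarrow> int) \<Rightarrow> bool" where
  "disj3 p q \<longleftrightarrow> p 0 \<noteq> q 0 \<and> p 0 \<noteq> q 1 \<and> p 0 \<noteq> q 2 \<and> p 1 \<noteq> q 0 \<and> p 1 \<noteq> q 1 \<and> p 1 \<noteq> q 2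
     \<and> p 2 \<noteq> q 0 \<and> p 2 \<noteq> q 1 \<and> p 2 \<noteq> q 2"

lemma all3: "(\<forall>s::nat<3. P s) \<longleftrightarrow> P 0 \<and> P 1 \<and> P 2"
proof
  assume "\<forall>s<3. P s" then show "P 0 \<and> P 1 \<and> P 2" by simp
next
  assume H: "P 0 \<and> P 1 \<and> P 2"
  show "\<forall>s<3. P s"
  proof (intro allI impI)
    fix s :: nat assume "s < 3"
    then have "s = 0 \<or> s = 1 \<or> s = 2" by arith
    then show "P s" using H by auto
  qed
qed

lemma disj3_iff: "(\<forall>s<3. \<forall>t<3. p s \<noteq> q t) \<longleftrightarrow> disj3 p q"
  unfolding disj3_def all3 by simp

lemma split_edge:
  assumes "x \<in> Inl ` C \<union> Inr ` I" "y \<in> Inl ` C \<union> Inr ` I" "x \<noteq> y"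
  shows "snd (split_graph C I N) x y \<longleftrightarrow>
    (case (x, y) of (Inl _, Inl _) \<Rightarrow> True | (Inl c, Inr i) \<Rightarrow> c \<in> N i
        | (Inr i, Inl c) \<Rightarrow> c \<in> N i | (Inr _, Inr _) \<Rightarrow> False)"
  using assms unfolding split_graph_def by simp

lemma odd_gap: "odd (i::nat) \<Longrightarrow> odd i' \<Longrightarrow> i \<noteq> i' \<Longrightarrow> i + 2 \<le> i' \<or> i' + 2 \<le> i"
  by presburger
lemma even_gap: "even (i::nat) \<Longrightarrow> even i' \<Longrightarrow> i \<noteq> i' \<Longrightarrow> i + 2 \<le> i' \<or> i' + 2 \<le> i"
  by presburger

definition ok :: "bool \<Rightarrow> (nat \<Rightarrow> int) \<Rightarrow> (nat \<Rightarrow> int) \<Rightarrow> bool" where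
  "ok e p q \<longleftrightarrow> disj3 p q \<and> disj3 q p \<and> (e \<longleftrightarrow> inter p q \<or> inter q p)"

lemma okI: "disj3 p q \<Longrightarrow> disj3 q p \<Longrightarrow> (e \<longleftrightarrow> inter p q \<or> inter q p) \<Longrightarrow> ok e p q"
  unfolding ok_def by blast

lemma ok_sym: "ok e p q \<Longrightarrow> ok e q p" unfolding ok_def by blast

lemma wr_split:
  fixes p :: "nat + nat \<Rightarrow> nat \<Rightarrow> int"
  assumes "distinct vs" "set vs = Inl ` C \<union> Inr ` I"
    and mono: "\<forall>v\<in>set vs. p v 0 < p v 1 \<and> p v 1 < p v 2"
    and cc: "\<And>j j'. j \<in> C \<Longrightarrow> j' \<in> C \<Longrightarrow> j \<noteq> j' \<Longrightarrow> ok True (p (Inl j)) (p (Inl j'))"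
    and ic: "\<And>i j. i \<in> I \<Longrightarrow> j \<in> C \<Longrightarrow> ok (j \<in> N i) (p (Inr i)) (p (Inl j))"
    and ii: "\<And>i i'. i \<in> I \<Longrightarrow> i' \<in> I \<Longrightarrow> i \<noteq> i' \<Longrightarrow> ok False (p (Inr i)) (p (Inr i'))"
  shows "word_representable (split_graph C I N)"
proof -
  have "word_representable (set vs, snd (split_graph C I N))"
  proof (rule wr_pos[OF assms(1) mono])
    have Q: "\<forall>x\<in>set vs. \<forall>y\<in>set vs. x \<noteq> y \<longrightarrow> ok (snd (split_graph C I N) x y) (p x) (p y)"
      unfolding assms(2)
    proof (rule all_pairs_split)
      show "\<forall>j\<in>C. \<forall>j'\<in>C. j \<noteq> j' \<longrightarrow> ok (snd (split_graph C I N) (Inl j) (Inl j')) (p (Inl j)) (p (Inl j'))"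
        using cc by (simp add: split_graph_def)
      show "\<forall>i\<in>I. \<forall>j\<in>C. ok (snd (split_graph C I N) (Inr i) (Inl j)) (p (Inr i)) (p (Inl j)) \<and>
          ok (snd (split_graph C I N) (Inl j) (Inr i)) (p (Inl j)) (p (Inr i))"
        using ic ok_sym by (simp add: split_graph_def)
      show "\<forall>i\<in>I. \<forall>i'\<in>I. i \<noteq> i' \<longrightarrow> ok (snd (split_graph C I N) (Inr i) (Inr i')) (p (Inr i)) (p (Inr i'))"
        using ii by (simp add: split_graph_def)
    qed
    show "\<forall>x\<in>set vs. \<forall>y\<in>set vs. x \<noteq> y \<longrightarrow> (\<forall>s<3. \<forall>t<3. p x s \<noteq> p y t)"
      using Q unfolding ok_def disj3_iff by blast
    show "\<forall>x\<in>set vs. \<forall>y\<in>set vs. x \<noteq> y \<longrightarrow> (snd (split_graph C I N) x y \<longleftrightarrow> inter (p x) (p y) \<or> inter (p y) (p x))"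
      using Q unfolding ok_def by blast
  qed
  moreover have "set vs = fst (split_graph C I N)" using assms(2) by (simp add: split_graph_def)
  ultimately show ?thesis by (metis prod.collapse)
qed

lemma vs_split: "distinct (map Inl [a..<b] @ map Inr [c..<d] :: (nat+nat) list)"
   "set (map Inl [a..<b] @ map Inr [c..<d] :: (nat+nat) list) = Inl ` {a..<b} \<union> Inr ` {c..<d}"
  by (auto simp: distinct_map inj_on_def)

definition pC :: "nat \<Rightarrow> nat \<Rightarrow> nat \<Rightarrow> int" where
  "pC k j = tri (4*int j) (4*int k + 4*int j) (8*int k + 4*int j)"
definition pT :: "nat \<Rightarrow> nat \<Rightarrow> nat \<Rightarrow> int" where
  "pT k i = tri (4*int k + 4*int i - 1) (4*int k + 4*int i + 5) (8*int k + 4*int i + 5)"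
definition pS :: "nat \<Rightarrow> nat \<Rightarrow> nat \<Rightarrow> int" where
  "pS k i = tri (4*int i - 1) (4*int i + 5) (4*int k + 4*int i + 5)"
definition pK :: "nat \<Rightarrow> nat \<Rightarrow> int" where
  "pK k = tri 5 (4*int k + 5) (12*int k - 1)"

definition pB :: "nat \<Rightarrow> nat \<Rightarrow> int" where
  "pB k = tri 6 (4*int k - 3) (8*int k + 5)"
definition pA1 :: "nat \<Rightarrow> nat \<Rightarrow> int" where
  "pA1 n = tri (4*int n + 3) (4*int n + 9) (12*int n + 8)"
definition pB1 :: "nat \<Rightarrow> nat \<Rightarrow> int" where
  "pB1 n = tri 3 (4*int n - 2) (8*int n + 3)"
definition pB2 :: "nat \<Rightarrow> nat \<Rightarrow> int" where
  "pB2 n = tri (4*int n + 7) (8*int n + 2) (12*int n + 4)"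

lemmas pdefs = pC_def pT_def pS_def pK_def pB_def pA1_def pB1_def pB2_def ok_def disj3_def inter_def

lemma es_CC: "j \<noteq> j' \<Longrightarrow> 1 \<le> j \<Longrightarrow> j \<le> k \<Longrightarrow> 1 \<le> j' \<Longrightarrow> j' \<le> k \<Longrightarrow> ok True (pC k j) (pC k j')"
  unfolding pdefs by auto
lemma es_TC: "1 \<le> i \<Longrightarrow> i < k \<Longrightarrow> 1 \<le> j \<Longrightarrow> j \<le> k \<Longrightarrow> ok (j = i \<or> j = i + 1) (pT k i) (pC k j)"
  unfolding pdefs by (simp; arith)
lemma es_SC: "1 \<le> i \<Longrightarrow> i < k \<Longrightarrow> 1 \<le> j \<Longrightarrow> j \<le> k \<Longrightarrow> ok (j = i \<or> j = i + 1) (pS k i) (pC k j)"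
  unfolding pdefs by (simp; arith)
lemma es_KC: "3 \<le> k \<Longrightarrow> 1 \<le> j \<Longrightarrow> j \<le> k \<Longrightarrow> ok (j = 1 \<or> j = k) (pK k) (pC k j)"
  unfolding pdefs by (simp; arith)
lemma es_TT: "i + 2 \<le> i' \<Longrightarrow> i' < k \<Longrightarrow> ok False (pT k i) (pT k i')"
  unfolding pdefs by (simp; arith)
lemma es_SS: "i + 2 \<le> i' \<Longrightarrow> i' < k \<Longrightarrow> ok False (pS k i) (pS k i')"
  unfolding pdefs by (simp; arith)
lemma es_TS: "1 \<le> i \<Longrightarrow> i < k \<Longrightarrow> 1 \<le> i' \<Longrightarrow> i' < k \<Longrightarrow> i \<noteq> i' \<Longrightarrow> ok False (pT k i) (pS k i')"
  unfolding pdefs by (simp; arith)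
lemma es_KT: "3 \<le> k \<Longrightarrow> 1 \<le> i \<Longrightarrow> i < k \<Longrightarrow> ok False (pK k) (pT k i)"
  unfolding pdefs by (simp; arith)
lemma es_KS: "3 \<le> k \<Longrightarrow> 2 \<le> i \<Longrightarrow> i < k \<Longrightarrow> ok False (pK k) (pS k i)"
  unfolding pdefs by (simp; arith)

lemma f2_BC: "5 \<le> k \<Longrightarrow> 1 \<le> j \<Longrightarrow> j \<le> k \<Longrightarrow> ok (2 \<le> j \<and> j \<le> k - 1) (pB k) (pC k j)"
  unfolding pdefs by (simp; arith)
lemma f2_BT: "5 \<le> k \<Longrightarrow> 1 \<le> i \<Longrightarrow> i < k \<Longrightarrow> ok False (pB k) (pT k i)"
  unfolding pdefs by (simp; arith)
lemma f2_BS: "5 \<le> k \<Longrightarrow> 2 \<le> i \<Longrightarrow> i < k \<Longrightarrow> i + 2 \<noteq> k \<Longrightarrow> ok False (pB k) (pS k i)"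
  unfolding pdefs by (simp; arith)

text \<open>F1 with n = k - 1\<close>
lemma f1_A1C: "4 \<le> n \<Longrightarrow> 1 \<le> j \<Longrightarrow> j \<le> n \<Longrightarrow> ok (j = 1 \<or> j = 2) (pA1 n) (pC n j)"
  unfolding pdefs by (simp; arith)
lemma f1_A1T: "4 \<le> n \<Longrightarrow> 3 \<le> i \<Longrightarrow> i < n \<Longrightarrow> ok False (pA1 n) (pT n i)"
  unfolding pdefs by (simp; arith)
lemma f1_A1S: "4 \<le> n \<Longrightarrow> 2 \<le> i \<Longrightarrow> i < n \<Longrightarrow> ok False (pA1 n) (pS n i)"
  unfolding pdefs by (simp; arith)
lemma f1_B1C: "4 \<le> n \<Longrightarrow> 1 \<le> j \<Longrightarrow> j \<le> n \<Longrightarrow> ok (j \<le> n - 1) (pB1 n) (pC n j)"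
  unfolding pdefs by (simp; arith)
lemma f1_B2C: "4 \<le> n \<Longrightarrow> 1 \<le> j \<Longrightarrow> j \<le> n \<Longrightarrow> ok (2 \<le> j) (pB2 n) (pC n j)"
  unfolding pdefs by (simp; arith)
lemma f1_B1T: "4 \<le> n \<Longrightarrow> 3 \<le> i \<Longrightarrow> i < n \<Longrightarrow> ok False (pB1 n) (pT n i)"
  unfolding pdefs by (simp; arith)
lemma f1_B1S: "4 \<le> n \<Longrightarrow> 2 \<le> i \<Longrightarrow> i < n \<Longrightarrow> ok False (pB1 n) (pS n i)"
  unfolding pdefs by (simp; arith)
lemma f1_B2T: "4 \<le> n \<Longrightarrow> 3 \<le> i \<Longrightarrow> i < n \<Longrightarrow> ok False (pB2 n) (pT n i)"
  unfolding pdefs by (simp; arith)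
lemma f1_B2S: "4 \<le> n \<Longrightarrow> 2 \<le> i \<Longrightarrow> i < n \<Longrightarrow> ok False (pB2 n) (pS n i)"
  unfolding pdefs by (simp; arith)
lemma f1_B1A1: "4 \<le> n \<Longrightarrow> ok False (pB1 n) (pA1 n)"
  unfolding pdefs by (simp; arith)
lemma f1_B2A1: "4 \<le> n \<Longrightarrow> ok False (pB2 n) (pA1 n)"
  unfolding pdefs by (simp; arith)
lemma f1_B1B2: "4 \<le> n \<Longrightarrow> ok False (pB1 n) (pB2 n)"
  unfolding pdefs by (simp; arith)

definition pes :: "nat \<Rightarrow> nat + nat \<Rightarrow> nat \<Rightarrow> int" where
  "pes k v = (case v of Inl j \<Rightarrow> pC k j
     | Inr i \<Rightarrow> (if i = k then pK k else if odd i then pT k i else pS k i))"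

lemma esun_wr:
  assumes k: "k \<ge> 3"
  shows "word_representable (even_sun k)"
  unfolding even_sun_def
proof (rule wr_split[where vs="map Inl [1..<k+1] @ map Inr [1..<k+1]" and p="pes k"])
  show "distinct (map Inl [1..<k+1] @ map Inr [1..<k+1] :: (nat+nat) list)" by (rule vs_split)
  show "set (map Inl [1..<k+1] @ map Inr [1..<k+1]) = Inl ` {1..k} \<union> Inr ` {1..k}"
    by (auto simp: vs_split)
  show "\<forall>v\<in>set (map Inl [1..<k+1] @ map Inr [1..<k+1]). pes k v 0 < pes k v 1 \<and> pes k v 1 < pes k v 2"
    using k by (auto simp: pes_def pC_def pT_def pS_def pK_def)
  show "ok True (pes k (Inl j)) (pes k (Inl j'))" if "j \<in> {1..k}" "j' \<in> {1..k}" "j \<noteq> j'" for j j'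
    using es_CC[of j j' k] that by (simp add: pes_def)
  show "ok (j \<in> sun_nbr k i) (pes k (Inr i)) (pes k (Inl j))" if H: "i \<in> {1..k}" "j \<in> {1..k}" for i j
  proof -
    consider "i = k" | "i < k" "odd i" | "i < k" "even i" using H by fastforce
    then show ?thesis
    proof cases
      case 1 then show ?thesis using es_KC[of k j] k H by (auto simp: pes_def sun_nbr_def)
    next
      case 2 then show ?thesis using es_TC[of i k j] H by (auto simp: pes_def sun_nbr_def)
    next
      case 3 then show ?thesis using es_SC[of i k j] H by (auto simp: pes_def sun_nbr_def)
    qed
  qed
  show "ok False (pes k (Inr i)) (pes k (Inr i'))" if "i \<in> {1..k}" "i' \<in> {1..k}" "i \<noteq> i'" for i i'
  proof -
    have A: "ok False (pes k (Inr i)) (pes k (Inr i'))" if H: "i \<in> {1..k}" "i' \<in> {1..k}" "i < i'" for i i'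
    proof -
      have "i < k" using H by auto
      consider "i' = k" "odd i" | "i' = k" "even i" | "i' < k" "odd i" "odd i'" | "i' < k" "even i" "even i'"
        | "i' < k" "odd i" "even i'" | "i' < k" "even i" "odd i'" using H by fastforce
      then show ?thesis
      proof cases
        case 1 then show ?thesis using es_KT[of k i] ok_sym k H by (auto simp: pes_def)
      next
        case 2 then have "i \<noteq> 1" by auto
        then show ?thesis using es_KS[of k i] ok_sym k H 2 by (auto simp: pes_def)
      next
        case 3 then show ?thesis using es_TT[of i i' k] odd_gap[of i i'] H by (auto simp: pes_def)
      next
        case 4 then show ?thesis using es_SS[of i i' k] even_gap[of i i'] H by (auto simp: pes_def)
      next
        case 5 then show ?thesis using es_TS[of i k i'] H by (auto simp: pes_def)
      next
        case 6 then show ?thesis using es_TS[of i' k i] ok_sym H by (auto simp: pes_def)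
      qed
    qed
    show ?thesis
    proof (cases "i < i'")
      case True then show ?thesis using A that by blast
    next
      case False then show ?thesis using A[of i' i] that ok_sym by auto
    qed
  qed
qed


definition pf2 :: "nat \<Rightarrow> nat + nat \<Rightarrow> nat \<Rightarrow> int" where
  "pf2 k v = (case v of Inl j \<Rightarrow> pC k j
     | Inr i \<Rightarrow> (if i = k then pB k else if odd i then pT k i else pS k i))"

lemma f2_wr:
  assumes k: "k \<ge> 5" "odd k"
  shows "word_representable (F2 k)"
  unfolding F2_def
proof (rule wr_split[where vs="map Inl [1..<k+1] @ map Inr [1..<k+1]" and p="pf2 k"])
  show "distinct (map Inl [1..<k+1] @ map Inr [1..<k+1] :: (nat+nat) list)" by (rule vs_split)
  show "set (map Inl [1..<k+1] @ map Inr [1..<k+1]) = Inl ` {1..k} \<union> Inr ` {1..k}"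
    by (auto simp: vs_split)
  show "\<forall>v\<in>set (map Inl [1..<k+1] @ map Inr [1..<k+1]). pf2 k v 0 < pf2 k v 1 \<and> pf2 k v 1 < pf2 k v 2"
    using k by (auto simp: pf2_def pC_def pT_def pS_def pB_def)
  show "ok True (pf2 k (Inl j)) (pf2 k (Inl j'))" if "j \<in> {1..k}" "j' \<in> {1..k}" "j \<noteq> j'" for j j'
    using es_CC[of j j' k] that by (simp add: pf2_def)
  show "ok (j \<in> (if i \<le> k - 1 then {i, i+1} else {2..k-1})) (pf2 k (Inr i)) (pf2 k (Inl j))"
    if H: "i \<in> {1..k}" "j \<in> {1..k}" for i j
  proof -
    consider "i = k" | "i < k" "odd i" | "i < k" "even i" using H by fastforce
    then show ?thesis
    proof cases
      case 1 then show ?thesis using f2_BC[of k j] k H by (auto simp: pf2_def)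
    next
      case 2 then show ?thesis using es_TC[of i k j] H by (auto simp: pf2_def)
    next
      case 3 then show ?thesis using es_SC[of i k j] H by (auto simp: pf2_def)
    qed
  qed
  show "ok False (pf2 k (Inr i)) (pf2 k (Inr i'))" if "i \<in> {1..k}" "i' \<in> {1..k}" "i \<noteq> i'" for i i'
  proof -
    have A: "ok False (pf2 k (Inr i)) (pf2 k (Inr i'))" if H: "i \<in> {1..k}" "i' \<in> {1..k}" "i < i'" for i i'
    proof -
      have "i < k" using H by auto
      consider "i' = k" "odd i" | "i' = k" "even i" | "i' < k" "odd i" "odd i'" | "i' < k" "even i" "even i'"
        | "i' < k" "odd i" "even i'" | "i' < k" "even i" "odd i'" using H by fastforce
      then show ?thesis
      proof cases
        case 1 then show ?thesis using f2_BT[of k i] ok_sym k H by (auto simp: pf2_def)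
      next
        case 2 then have "i \<noteq> 1" "i + 2 \<noteq> k" using k by auto
        then show ?thesis using f2_BS[of k i] ok_sym k H 2 by (auto simp: pf2_def)
      next
        case 3 then show ?thesis using es_TT[of i i' k] odd_gap[of i i'] H by (auto simp: pf2_def)
      next
        case 4 then show ?thesis using es_SS[of i i' k] even_gap[of i i'] H by (auto simp: pf2_def)
      next
        case 5 then show ?thesis using es_TS[of i k i'] H by (auto simp: pf2_def)
      next
        case 6 then show ?thesis using es_TS[of i' k i] ok_sym H by (auto simp: pf2_def)
      qed
    qed
    show ?thesis
    proof (cases "i < i'")
      case True then show ?thesis using A that by blast
    next
      case False then show ?thesis using A[of i' i] that ok_sym by auto
    qed
  qed
qed

definition pf1 :: "nat \<Rightarrow> nat + nat \<Rightarrow> nat \<Rightarrow> int" where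
  "pf1 n v = (case v of Inl j \<Rightarrow> pC n j
     | Inr i \<Rightarrow> (if i = n + 1 then pB2 n else if i = n then pB1 n else if i = 1 then pA1 n
                else if odd i then pT n i else pS n i))"

lemma f1_wr:
  assumes k: "k \<ge> 5" "odd k"
  shows "word_representable (F1 k)"
proof -
  define n where "n = k - 1"
  have n: "k = n + 1" "n \<ge> 4" using k unfolding n_def by arith+
  have F: "F1 k = split_graph {1..n} {1..n+1}
     (\<lambda>i. if i \<le> n - 1 then {i, i+1} else if i = n then {1..n-1} else {2..n})"
  proof -
    have e: "n + 1 - 1 = n" "n + 1 - 2 = n - 1" by arith+
    show ?thesis unfolding F1_def n(1) e by simp
  qed
  show ?thesis
    unfolding F
  proof (rule wr_split[where vs="map Inl [1..<n+1] @ map Inr [1..<n+2]" and p="pf1 n"])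
    show "distinct (map Inl [1..<n+1] @ map Inr [1..<n+2] :: (nat+nat) list)" by (rule vs_split)
    show "set (map Inl [1..<n+1] @ map Inr [1..<n+2]) = Inl ` {1..n} \<union> Inr ` {1..n+1}"
      by (auto simp: vs_split)
    show "\<forall>v\<in>set (map Inl [1..<n+1] @ map Inr [1..<n+2]). pf1 n v 0 < pf1 n v 1 \<and> pf1 n v 1 < pf1 n v 2"
      using n by (auto simp: pf1_def pC_def pT_def pS_def pA1_def pB1_def pB2_def)
    show "ok True (pf1 n (Inl j)) (pf1 n (Inl j'))" if "j \<in> {1..n}" "j' \<in> {1..n}" "j \<noteq> j'" for j j'
      using es_CC[of j j' n] that by (simp add: pf1_def)
    show "ok (j \<in> (if i \<le> n - 1 then {i, i+1} else if i = n then {1..n-1} else {2..n})) (pf1 n (Inr i)) (pf1 n (Inl j))"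
      if H: "i \<in> {1..n+1}" "j \<in> {1..n}" for i j
    proof -
      consider "i = n + 1" | "i = n" | "i = 1" | "1 < i" "i < n" "odd i" | "1 < i" "i < n" "even i" using H by fastforce
      then show ?thesis
      proof cases
        case 1 then show ?thesis using f1_B2C[of n j] n H by (auto simp: pf1_def)
      next
        case 2 then show ?thesis using f1_B1C[of n j] n H by (auto simp: pf1_def)
      next
        case 3 then show ?thesis using f1_A1C[of n j] n H by (auto simp: pf1_def numeral_2_eq_2)
      next
        case 4 then show ?thesis using es_TC[of i n j] H by (auto simp: pf1_def)
      next
        case 5 then show ?thesis using es_SC[of i n j] H by (auto simp: pf1_def)
      qed
    qed
    show "ok False (pf1 n (Inr i)) (pf1 n (Inr i'))" if "i \<in> {1..n+1}" "i' \<in> {1..n+1}" "i \<noteq> i'" for i i'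
    proof -
      have A: "ok False (pf1 n (Inr i)) (pf1 n (Inr i'))" if H: "i \<in> {1..n+1}" "i' \<in> {1..n+1}" "i < i'" for i i'
      proof -
        show ?thesis
        proof (cases "i' = n + 1")
          case I1: True
          consider "i = n" | "i = 1" | "1 < i" "i < n" "odd i" | "1 < i" "i < n" "even i"
            using H I1 by fastforce
          then show ?thesis
          proof cases
            case 1 then show ?thesis using f1_B1B2[of n] n I1 by (simp add: pf1_def)
          next
            case 2 then have "ok False (pA1 n) (pB2 n)" using f1_B2A1[of n] ok_sym n by blast
            then show ?thesis using 2 I1 n by (simp add: pf1_def)
          next
            case 3 then have "3 \<le> i" by presburger
            then have "ok False (pT n i) (pB2 n)" using f1_B2T[of n i] ok_sym n 3 by blast
            then show ?thesis using 3 I1 n by (simp add: pf1_def)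
          next
            case 4 then have "ok False (pS n i) (pB2 n)" using f1_B2S[of n i] ok_sym n by simp
            then show ?thesis using 4 I1 n by (simp add: pf1_def)
          qed
        next
          case I2: False
          show ?thesis
          proof (cases "i' = n")
            case I3: True
            consider "i = 1" | "1 < i" "odd i" | "1 < i" "even i" using H I3 by fastforce
            then show ?thesis
            proof cases
              case 1 then have "ok False (pA1 n) (pB1 n)" using f1_B1A1[of n] ok_sym n by blast
              then show ?thesis using 1 n I3 by (simp add: pf1_def)
            next
              case 2 then have "3 \<le> i" by presburger
              then have "ok False (pT n i) (pB1 n)" using f1_B1T[of n i] ok_sym n 2 H I3 by simp
              then show ?thesis using 2 H I3 n by (simp add: pf1_def)
            next
              case 3 then have "ok False (pS n i) (pB1 n)" using f1_B1S[of n i] ok_sym n H I3 by simp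
              then show ?thesis using 3 H I3 n by (simp add: pf1_def)
            qed
          next
            case I4: False
            then have i'n: "i' < n" using H I2 by auto
            show ?thesis
            proof (cases "i = 1")
              case I5: True
              show ?thesis
              proof (cases "odd i'")
                case True
                then have "3 \<le> i'" using H I5 by presburger
                then show ?thesis using f1_A1T[of n i'] n I5 i'n True by (simp add: pf1_def)
              next
                case False
                then have "2 \<le> i'" using H I5 by presburger
                then show ?thesis using f1_A1S[of n i'] n I5 i'n False by (simp add: pf1_def)
              qed
            next
              case I6: False
              then have i1: "1 < i" using H by auto
              consider "odd i" "odd i'" | "even i" "even i'" | "odd i" "even i'" | "even i" "odd i'" by blast
              then show ?thesis
              proof cases
                case 1 then show ?thesis using es_TT[of i i' n] odd_gap[of i i'] H i1 i'n by (auto simp: pf1_def)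
              next
                case 2 then show ?thesis using es_SS[of i i' n] even_gap[of i i'] H i1 i'n by (auto simp: pf1_def)
              next
                case 3 then show ?thesis using es_TS[of i n i'] H i1 i'n by (auto simp: pf1_def)
              next
                case 4 then have "ok False (pS n i) (pT n i')" using es_TS[of i' n i] ok_sym H i1 i'n by auto
                then show ?thesis using 4 H i1 i'n n by (simp add: pf1_def)
              qed
            qed
          qed
        qed
      qed
      show ?thesis
      proof (cases "i < i'")
        case True then show ?thesis using A that by blast
      next
        case False then show ?thesis using A[of i' i] that ok_sym by auto
      qed
    qed
  qed
qed


definition pF0 :: "nat + nat \<Rightarrow> nat \<Rightarrow> int" where
  "pF0 v = (case v of Inl j \<Rightarrow> (if j = 0 then tri 0 8 16 else if j = 1 then tri 5 12 21
       else if j = 2 then tri 2 11 20 else if j = 3 then tri 1 10 17 else tri 7 14 22)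
     | Inr i \<Rightarrow> (if i = 1 then tri 3 15 23 else if i = 2 then tri 6 13 18 else tri 4 9 19))"

lemma set04: "(j::nat) \<in> {0..4} \<longleftrightarrow> j = 0 \<or> j = 1 \<or> j = 2 \<or> j = 3 \<or> j = 4" by auto
lemma set13: "(j::nat) \<in> {1..3} \<longleftrightarrow> j = 1 \<or> j = 2 \<or> j = 3" by auto

lemma f0_wr: "word_representable F0"
  unfolding F0_def
proof (rule wr_split[where vs="map Inl [0..<5] @ map Inr [1..<4]" and p="pF0"])
  show "distinct (map Inl [0..<5] @ map Inr [1..<4] :: (nat+nat) list)" by (rule vs_split)
  show "set (map Inl [0..<5] @ map Inr [1..<4]) = Inl ` {0..4} \<union> Inr ` {1..3}"
    by (auto simp: vs_split)
  show "\<forall>v\<in>set (map Inl [0..<5] @ map Inr [1..<4]). pF0 v 0 < pF0 v 1 \<and> pF0 v 1 < pF0 v 2"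
    by (simp add: pF0_def upt_rec)
  show "ok True (pF0 (Inl j)) (pF0 (Inl j'))" if "j \<in> {0..4}" "j' \<in> {0..4}" "j \<noteq> j'" for j j'
    using that unfolding set04 by (elim disjE) (simp_all add: pF0_def ok_def disj3_def inter_def)
  show "ok (j \<in> (if i = 1 then {0, 2, 3} else if i = 2 then {0, 3, 4} else {0, 1, 4})) (pF0 (Inr i)) (pF0 (Inl j))"
    if "i \<in> {1..3}" "j \<in> {0..4}" for i j
    using that unfolding set04 set13 by (elim disjE) (simp_all add: pF0_def ok_def disj3_def inter_def)
  show "ok False (pF0 (Inr i)) (pF0 (Inr i'))" if "i \<in> {1..3}" "i' \<in> {1..3}" "i \<noteq> i'" for i i'
    using that unfolding set13 by (elim disjE) (simp_all add: pF0_def ok_def disj3_def inter_def)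
qed

lemma bef_refl: "bef w x x" unfolding bef_def by auto

lemma bef_antisym:
  assumes "x \<in> set w" "x \<noteq> y" "bef w x y" shows "\<not> bef w y x"
proof
  assume H: "bef w y x"
  have eq: "cnt w x j = cnt w y j" for j using assms(3) H unfolding bef_def by (meson le_antisym)
  obtain i where i: "i < length w" "w ! i = x" using assms(1) by (meson in_set_conv_nth)
  have "take (Suc i) w = take i w @ [x]" using i by (simp add: take_Suc_conv_app_nth)
  then have "cnt w x (Suc i) = cnt w x i + 1" "cnt w y (Suc i) = cnt w y i"
    using assms(2) unfolding cnt_def by auto
  then show False using eq[of i] eq[of "Suc i"] by simp
qed

lemma bef_trans:
  assumes "bef w x y" "bef w y z" "bef w x z \<or> bef w z x" shows "bef w x z"
proof -
  have "cnt w z j \<le> cnt w x j \<and> cnt w x j \<le> cnt w z j + 1" for j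
  proof -
    have a: "cnt w y j \<le> cnt w x j" "cnt w z j \<le> cnt w y j"
      "(cnt w z j \<le> cnt w x j \<and> cnt w x j \<le> cnt w z j + 1) \<or> (cnt w x j \<le> cnt w z j \<and> cnt w z j \<le> cnt w x j + 1)"
      using assms unfolding bef_def by blast+
    then show ?thesis by linarith
  qed
  then show ?thesis unfolding bef_def by auto
qed

lemma chain3:
  assumes "bef w x y" "bef w y z" "bef w z u" "bef w x u"
  shows "bef w x z \<and> bef w y u"
proof -
  have "cnt w z j \<le> cnt w x j \<and> cnt w x j \<le> cnt w z j + 1 \<and> cnt w u j \<le> cnt w y j \<and> cnt w y j \<le> cnt w u j + 1" for j
  proof -
    have a: "cnt w y j \<le> cnt w x j" "cnt w z j \<le> cnt w y j" "cnt w u j \<le> cnt w z j"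
      "cnt w x j \<le> cnt w u j + 1"
      using assms unfolding bef_def by blast+
    then show ?thesis by linarith
  qed
  then show ?thesis unfolding bef_def by auto
qed

lemma chain4:
  assumes "bef w x1 x2" "bef w x2 x3" "bef w x3 x4" "bef w x4 x5" "bef w x1 x5"
  shows "bef w x2 x4"
proof -
  have "cnt w x4 j \<le> cnt w x2 j \<and> cnt w x2 j \<le> cnt w x4 j + 1" for j
  proof -
    have a: "cnt w x2 j \<le> cnt w x1 j" "cnt w x3 j \<le> cnt w x2 j" "cnt w x4 j \<le> cnt w x3 j"
      "cnt w x5 j \<le> cnt w x4 j" "cnt w x1 j \<le> cnt w x5 j + 1"
      using assms unfolding bef_def by blast+
    then show ?thesis by linarith
  qed
  then show ?thesis unfolding bef_def by auto
qed

locale srep =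
  fixes C I :: "nat set" and N :: "nat \<Rightarrow> nat set" and w :: "(nat + nat) list"
  assumes finC: "finite C"
    and Nsub: "\<And>i. i \<in> I \<Longrightarrow> N i \<subseteq> C"
    and setw: "set w = Inl ` C \<union> Inr ` I"
    and rep: "\<And>a b. a \<in> set w \<Longrightarrow> b \<in> set w \<Longrightarrow> a \<noteq> b \<Longrightarrow>
        (snd (split_graph C I N) a b \<longleftrightarrow> alternate w a b)"
begin

abbreviation B where "B x y \<equiv> bef w x y"

lemma inC: "c \<in> C \<Longrightarrow> Inl c \<in> set w" using setw by auto
lemma inI: "i \<in> I \<Longrightarrow> Inr i \<in> set w" using setw by auto

lemma cc_tot: "c \<in> C \<Longrightarrow> d \<in> C \<Longrightarrow> c \<noteq> d \<Longrightarrow> B (Inl c) (Inl d) \<or> B (Inl d) (Inl c)"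
proof -
  assume a: "c \<in> C" "d \<in> C" "c \<noteq> d"
  then have "alternate w (Inl c) (Inl d)" using rep[of "Inl c" "Inl d"] inC by (simp add: split_graph_def)
  moreover have ne: "Inl c \<noteq> (Inl d :: nat + nat)" using a(3) by simp
  ultimately show ?thesis using alt_bef[OF ne, of w] by simp
qed

lemma nb: "i \<in> I \<Longrightarrow> c \<in> N i \<Longrightarrow> B (Inl c) (Inr i) \<or> B (Inr i) (Inl c)"
proof -
  assume a: "i \<in> I" "c \<in> N i"
  then have cC: "c \<in> C" using Nsub by auto
  then have "alternate w (Inl c) (Inr i)" using rep[of "Inl c" "Inr i"] inC inI a by (simp add: split_graph_def)
  moreover have ne: "Inl c \<noteq> (Inr i :: nat + nat)" by simp
  ultimately show ?thesis using alt_bef[OF ne, of w] by simp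
qed

lemma nn: "i \<in> I \<Longrightarrow> c \<in> C \<Longrightarrow> c \<notin> N i \<Longrightarrow> \<not> B (Inl c) (Inr i) \<and> \<not> B (Inr i) (Inl c)"
proof -
  assume a: "i \<in> I" "c \<in> C" "c \<notin> N i"
  then have "\<not> alternate w (Inl c) (Inr i)" using rep[of "Inl c" "Inr i"] inC inI a by (simp add: split_graph_def)
  moreover have ne: "Inl c \<noteq> (Inr i :: nat + nat)" by simp
  ultimately show ?thesis using alt_bef[OF ne, of w] by simp
qed

lemma ii: "i \<in> I \<Longrightarrow> i' \<in> I \<Longrightarrow> i \<noteq> i' \<Longrightarrow> \<not> B (Inr i) (Inr i')"
proof -
  assume a: "i \<in> I" "i' \<in> I" "i \<noteq> i'"
  then have "\<not> alternate w (Inr i) (Inr i')" using rep[of "Inr i" "Inr i'"] inI by (simp add: split_graph_def)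
  moreover have ne: "Inr i \<noteq> (Inr i' :: nat + nat)" using a(3) by simp
  ultimately show ?thesis using alt_bef[OF ne, of w] by simp
qed

lemma cc_anti: "c \<in> C \<Longrightarrow> c \<noteq> d \<Longrightarrow> B (Inl c) (Inl d) \<Longrightarrow> \<not> B (Inl d) (Inl c)"
proof -
  assume a: "c \<in> C" "c \<noteq> d" "B (Inl c) (Inl d)"
  have ne: "Inl c \<noteq> (Inl d :: nat + nat)" using a(2) by simp
  show ?thesis by (rule bef_antisym[OF inC[OF a(1)] ne a(3)])
qed

lemma cc_trans: "c \<in> C \<Longrightarrow> d \<in> C \<Longrightarrow> e \<in> C \<Longrightarrow> B (Inl c) (Inl d) \<Longrightarrow> B (Inl d) (Inl e) \<Longrightarrow> B (Inl c) (Inl e)"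
proof -
  assume a: "c \<in> C" "d \<in> C" "e \<in> C" "B (Inl c) (Inl d)" "B (Inl d) (Inl e)"
  show ?thesis
  proof (cases "c = e")
    case True then show ?thesis using bef_refl by metis
  next
    case False
    then show ?thesis using bef_trans[OF a(4,5)] cc_tot[OF a(1,3) False] by blast
  qed
qed

definition r :: "nat \<Rightarrow> nat" where
  "r c = card {d \<in> C. d \<noteq> c \<and> B (Inl d) (Inl c)}"

abbreviation n where "n \<equiv> card C"

lemma r_less: "c \<in> C \<Longrightarrow> d \<in> C \<Longrightarrow> c \<noteq> d \<Longrightarrow> B (Inl c) (Inl d) \<Longrightarrow> r c < r d"
proof -
  assume a: "c \<in> C" "d \<in> C" "c \<noteq> d" "B (Inl c) (Inl d)"
  have sub: "{e \<in> C. e \<noteq> c \<and> B (Inl e) (Inl c)} \<subseteq> {e \<in> C. e \<noteq> d \<and> B (Inl e) (Inl d)}"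
  proof
    fix e assume e: "e \<in> {e \<in> C. e \<noteq> c \<and> B (Inl e) (Inl c)}"
    have "e \<noteq> d"
    proof
      assume "e = d" then show False using e a cc_anti by blast
    qed
    then show "e \<in> {e \<in> C. e \<noteq> d \<and> B (Inl e) (Inl d)}" using e a cc_trans by blast
  qed
  have "c \<in> {e \<in> C. e \<noteq> d \<and> B (Inl e) (Inl d)}" "c \<notin> {e \<in> C. e \<noteq> c \<and> B (Inl e) (Inl c)}" using a by auto
  then have "{e \<in> C. e \<noteq> c \<and> B (Inl e) (Inl c)} \<subset> {e \<in> C. e \<noteq> d \<and> B (Inl e) (Inl d)}" using sub by blast
  then show ?thesis unfolding r_def by (rule psubset_card_mono[rotated]) (use finC in auto)
qed

lemma r_iff: "c \<in> C \<Longrightarrow> d \<in> C \<Longrightarrow> c \<noteq> d \<Longrightarrow> B (Inl c) (Inl d) \<longleftrightarrow> r c < r d"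
proof -
  assume a: "c \<in> C" "d \<in> C" "c \<noteq> d"
  show ?thesis
  proof
    assume "B (Inl c) (Inl d)" then show "r c < r d" using r_less a by blast
  next
    assume h: "r c < r d"
    show "B (Inl c) (Inl d)"
    proof (rule ccontr)
      assume "\<not> B (Inl c) (Inl d)"
      then have "B (Inl d) (Inl c)" using cc_tot a by blast
      then have "r d < r c" using r_less a by blast
      then show False using h by simp
    qed
  qed
qed

lemma r_inj: "c \<in> C \<Longrightarrow> d \<in> C \<Longrightarrow> r c = r d \<Longrightarrow> c = d"
proof (rule ccontr)
  assume a: "c \<in> C" "d \<in> C" "r c = r d" "c \<noteq> d"
  then have "B (Inl c) (Inl d) \<or> B (Inl d) (Inl c)" using cc_tot by blast
  then have "r c < r d \<or> r d < r c" using r_less a by blast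
  then show False using a(3) by simp
qed

lemma r_lt: "c \<in> C \<Longrightarrow> r c < n"
proof -
  assume c: "c \<in> C"
  have "{d \<in> C. d \<noteq> c \<and> B (Inl d) (Inl c)} \<subset> C" using c by auto
  then show ?thesis unfolding r_def using finC psubset_card_mono by blast
qed

lemma r_surj: "t < n \<Longrightarrow> \<exists>c\<in>C. r c = t"
proof -
  assume t: "t < n"
  have "r ` C \<subseteq> {..<n}" using r_lt by auto
  moreover have "inj_on r C" unfolding inj_on_def using r_inj by blast
  then have "card (r ` C) = n" by (rule card_image)
  ultimately have "r ` C = {..<n}" using card_subset_eq[of "{..<n}" "r ` C"] by simp
  then have "t \<in> r ` C" using t by simp
  then obtain c where "c \<in> C" "t = r c" by blast
  then show ?thesis by blast
qed

definition cadj :: "nat \<Rightarrow> nat \<Rightarrow> bool" where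
  "cadj x y \<longleftrightarrow> (r x + 1) mod n = r y \<or> (r y + 1) mod n = r x"

lemma cadj_sym: "cadj x y \<longleftrightarrow> cadj y x" unfolding cadj_def by blast

end

lemma mod_suc_inj: "(a::nat) < n \<Longrightarrow> b < n \<Longrightarrow> (a + 1) mod n = (b + 1) mod n \<Longrightarrow> a = b"
proof -
  assume a: "a < n" "b < n" "(a + 1) mod n = (b + 1) mod n"
  have e: "(x + 1) mod n = (if x + 1 = n then 0 else x + 1)" if "x < n" for x :: nat
    using that by (cases "x + 1 = n") auto
  show ?thesis using a e[OF a(1)] e[OF a(2)] by (auto split: if_splits)
qed

context srep
begin

lemma NC: "i \<in> I \<Longrightarrow> c \<in> N i \<Longrightarrow> c \<in> C" using Nsub by blast

lemma ca_ne: "i \<in> I \<Longrightarrow> c \<in> C \<Longrightarrow> B (Inl c) (Inr i) \<Longrightarrow> \<not> B (Inr i) (Inl c)"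
proof -
  assume a: "i \<in> I" "c \<in> C" "B (Inl c) (Inr i)"
  have ne: "Inl c \<noteq> (Inr i :: nat + nat)" by simp
  show ?thesis by (rule bef_antisym[OF inC[OF a(2)] ne a(3)])
qed

lemma uv_bef:
  assumes "i \<in> I" "u \<in> N i" "v \<in> N i" "B (Inl u) (Inr i)" "B (Inr i) (Inl v)"
  shows "u \<noteq> v \<and> B (Inl u) (Inl v)"
proof -
  have uC: "u \<in> C" "v \<in> C" using assms NC by auto
  have "u \<noteq> v" using ca_ne[OF assms(1) uC(1) assms(4)] assms(5) by blast
  moreover have "B (Inl u) (Inl v)" using bef_trans[OF assms(4,5)] cc_tot[OF uC \<open>u \<noteq> v\<close>] by blast
  ultimately show ?thesis by blast
qed

lemma D1:
  assumes "i \<in> I" "u \<in> N i" "v \<in> N i" "z \<in> C" "B (Inl u) (Inr i)" "B (Inr i) (Inl v)"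
    "B (Inl z) (Inl u)" "z \<noteq> u"
  shows "z \<in> N i"
proof (rule ccontr)
  assume zn: "z \<notin> N i"
  have uC: "u \<in> C" "v \<in> C" using assms NC by auto
  have uv: "u \<noteq> v" "B (Inl u) (Inl v)" using uv_bef[OF assms(1-3,5,6)] by auto
  have "z \<noteq> v" using zn assms(3) by blast
  have zv: "B (Inl z) (Inl v)" using cc_trans[OF assms(4) uC assms(7) uv(2)] .
  have "B (Inl z) (Inr i)" using chain3[OF assms(7) assms(5) assms(6) zv] by blast
  then show False using nn[OF assms(1,4) zn] by blast
qed

lemma D1':
  assumes "i \<in> I" "u \<in> N i" "v \<in> N i" "z \<in> C" "B (Inl u) (Inr i)" "B (Inr i) (Inl v)"
    "B (Inl v) (Inl z)" "z \<noteq> v"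
  shows "z \<in> N i"
proof (rule ccontr)
  assume zn: "z \<notin> N i"
  have uC: "u \<in> C" "v \<in> C" using assms NC by auto
  have uv: "u \<noteq> v" "B (Inl u) (Inl v)" using uv_bef[OF assms(1-3,5,6)] by auto
  have uz: "B (Inl u) (Inl z)" using cc_trans[OF uC(1) uC(2) assms(4) uv(2) assms(7)] .
  have "B (Inr i) (Inl z)" using chain3[OF assms(5) assms(6) assms(7) uz] by blast
  then show False using nn[OF assms(1,4) zn] by blast
qed

lemma D2:
  assumes "i \<in> I" "v \<in> N i" "B (Inr i) (Inl u)" "B (Inr i) (Inl v)"
    "B (Inl u) (Inl z)" "B (Inl z) (Inl v)" "z \<in> C"
  shows "z \<in> N i"
proof (rule ccontr)
  assume zn: "z \<notin> N i"
  have "B (Inr i) (Inl z)" using chain3[OF assms(3) assms(5) assms(6) assms(4)] by blast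
  then show False using nn[OF assms(1,7) zn] by blast
qed

lemma D3:
  assumes "i \<in> I" "B (Inl u) (Inr i)" "B (Inl v) (Inr i)"
    "B (Inl u) (Inl z)" "B (Inl z) (Inl v)" "z \<in> C"
  shows "z \<in> N i"
proof (rule ccontr)
  assume zn: "z \<notin> N i"
  have "B (Inl z) (Inr i)" using chain3[OF assms(4) assms(5) assms(3) assms(2)] by blast
  then show False using nn[OF assms(1,6) zn] by blast
qed

lemma mix_cross:
  assumes "a \<in> I" "b \<in> I" "a \<noteq> b" "u \<in> N a" "v \<in> N a" "u \<in> N b" "v \<in> N b"
    "B (Inl u) (Inr a)" "B (Inr a) (Inl v)"
  shows "B (Inl u) (Inr b) \<and> B (Inr b) (Inl v)"
proof -
  have uC: "u \<in> C" "v \<in> C" using assms NC by auto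
  have uv: "u \<noteq> v" "B (Inl u) (Inl v)" using uv_bef[OF assms(1,4,5,8,9)] by auto
  have ab: "\<not> B (Inr a) (Inr b)" "\<not> B (Inr b) (Inr a)" using ii assms(1-3) by auto
  consider "B (Inl u) (Inr b)" "B (Inr b) (Inl v)" | "B (Inr b) (Inl u)" "B (Inr b) (Inl v)"
    | "B (Inl u) (Inr b)" "B (Inl v) (Inr b)" | "B (Inr b) (Inl u)" "B (Inl v) (Inr b)"
    using nb[OF assms(2,6)] nb[OF assms(2,7)] by blast
  then show ?thesis
  proof cases
    case 1 then show ?thesis by blast
  next
    case 2
    have "B (Inr b) (Inr a)" using chain3[OF 2(1) assms(8) assms(9) 2(2)] by blast
    then show ?thesis using ab by blast
  next
    case 3
    have "B (Inr a) (Inr b)" using chain3[OF assms(8) assms(9) 3(2) 3(1)] by blast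
    then show ?thesis using ab by blast
  next
    case 4
    have "B (Inl v) (Inl u)" using bef_trans[OF 4(2) 4(1)] cc_tot[OF uC uv(1)] by blast
    then show ?thesis using cc_anti[OF uC(1) uv(1) uv(2)] by blast
  qed
qed

lemma arc:
  assumes "i \<in> I" "u \<in> N i" "v \<in> N i" "z \<in> C" "z \<notin> N i" "r u < r z" "r z < r v"
  shows "B (Inl u) (Inr i) \<and> B (Inr i) (Inl v) \<and> (\<forall>t\<in>C. r t < r u \<or> r v < r t \<longrightarrow> t \<in> N i)"
proof -
  have uC: "u \<in> C" "v \<in> C" using assms NC by auto
  have ne: "u \<noteq> z" "z \<noteq> v" "u \<noteq> v" using assms(6,7) by auto
  have uz: "B (Inl u) (Inl z)" using r_iff[OF uC(1) assms(4) ne(1)] assms(6) by blast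
  have zv: "B (Inl z) (Inl v)" using r_iff[OF assms(4) uC(2) ne(2)] assms(7) by blast
  have uv: "B (Inl u) (Inl v)" using cc_trans[OF uC(1) assms(4) uC(2) uz zv] .
  have ori: "B (Inl u) (Inr i) \<and> B (Inr i) (Inl v)"
  proof -
    consider "B (Inl u) (Inr i)" "B (Inr i) (Inl v)" | "B (Inr i) (Inl u)" "B (Inr i) (Inl v)"
      | "B (Inl u) (Inr i)" "B (Inl v) (Inr i)" | "B (Inr i) (Inl u)" "B (Inl v) (Inr i)"
      using nb[OF assms(1,2)] nb[OF assms(1,3)] by blast
    then show ?thesis
    proof cases
      case 1 then show ?thesis by blast
    next
      case 2 then show ?thesis using D2[OF assms(1,3) 2(1) 2(2) uz zv assms(4)] assms(5) by blast
    next
      case 3 then show ?thesis using D3[OF assms(1) 3(1) 3(2) uz zv assms(4)] assms(5) by blast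
    next
      case 4
      have "B (Inl v) (Inl u)" using bef_trans[OF 4(2) 4(1)] cc_tot[OF uC ne(3)] by blast
      then show ?thesis using cc_anti[OF uC(1) ne(3) uv] by blast
    qed
  qed
  have "t \<in> N i" if "t \<in> C" "r t < r u \<or> r v < r t" for t
    using that(2)
  proof
    assume h: "r t < r u"
    then have "t \<noteq> u" by auto
    then have "B (Inl t) (Inl u)" using r_iff[OF that(1) uC(1)] h by blast
    then show "t \<in> N i" using D1[OF assms(1,2,3) that(1)] ori \<open>t \<noteq> u\<close> by blast
  next
    assume h: "r v < r t"
    then have "t \<noteq> v" by auto
    then have "B (Inl v) (Inl t)" using r_iff[OF uC(2) that(1)] h by auto
    then show "t \<in> N i" using D1'[OF assms(1,2,3) that(1)] ori \<open>t \<noteq> v\<close> by blast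
  qed
  then show ?thesis using ori by blast
qed

definition el :: "nat \<Rightarrow> nat" where "el t = (SOME c. c \<in> C \<and> r c = t)"

lemma el: "t < n \<Longrightarrow> el t \<in> C \<and> r (el t) = t"
  unfolding el_def using r_surj by (metis (mono_tags, lifting) someI_ex)

lemma el_eq: "c \<in> C \<Longrightarrow> r c = t \<Longrightarrow> c = el t"
  using el r_inj r_lt by metis

end

context srep
begin

lemma cadj_succ: "x \<in> C \<Longrightarrow> y \<in> C \<Longrightarrow> r y = r x + 1 \<Longrightarrow> cadj x y"
proof -
  assume a: "x \<in> C" "y \<in> C" "r y = r x + 1"
  have "r x + 1 < n" using r_lt[OF a(2)] a(3) by simp
  then have "(r x + 1) mod n = r y" using a(3) by simp
  then show ?thesis unfolding cadj_def by blast
qed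

lemma cadj_wrap: "x \<in> C \<Longrightarrow> y \<in> C \<Longrightarrow> r x = 0 \<Longrightarrow> r y = n - 1 \<Longrightarrow> cadj x y"
proof -
  assume a: "x \<in> C" "y \<in> C" "r x = 0" "r y = n - 1"
  have "n > 0" using r_lt a(1) by fastforce
  then have "(r y + 1) mod n = r x" using a by simp
  then show ?thesis unfolding cadj_def by blast
qed

lemma A2':
  assumes "i \<in> I" "N i = {x, y}" "r x < r y" "n \<ge> 3"
  shows "cadj x y"
proof -
  have xC: "x \<in> C" "y \<in> C" using assms(1,2) NC by auto
  show ?thesis
  proof (cases "r y = r x + 1")
    case True then show ?thesis using cadj_succ xC by blast
  next
    case False
    then have lt: "r x + 1 < r y" using assms(3) by simp
    have ry: "r y < n" using r_lt xC by blast
    define z where "z = el (r x + 1)"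
    have z: "z \<in> C" "r z = r x + 1" using el lt ry unfolding z_def by auto
    have zn: "z \<notin> N i" using z lt assms(2) by auto
    have xN: "x \<in> N i" "y \<in> N i" using assms(2) by auto
    have A: "\<forall>t\<in>C. r t < r x \<or> r y < r t \<longrightarrow> t \<in> N i"
      using arc[OF assms(1) xN(1) xN(2) z(1) zn] z lt by simp
    have "r x = 0"
    proof (rule ccontr)
      assume "r x \<noteq> 0"
      then have "el 0 \<in> N i" using A el[of 0] ry by auto
      then show False using el[of 0] ry assms(2) \<open>r x \<noteq> 0\<close> assms(3) by auto
    qed
    moreover have "r y = n - 1"
    proof (rule ccontr)
      assume "r y \<noteq> n - 1"
      then have "r y < n - 1" using ry by simp
      then have "el (n - 1) \<in> N i" using A el[of "n - 1"] ry by auto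
      then show False using el[of "n - 1"] ry assms(2) \<open>r y < n - 1\<close> assms(3) by auto
    qed
    ultimately show ?thesis using cadj_wrap xC by blast
  qed
qed

lemma A2:
  assumes "i \<in> I" "N i = {x, y}" "x \<noteq> y" "n \<ge> 3"
  shows "cadj x y"
proof -
  have xC: "x \<in> C" "y \<in> C" using assms(1,2) NC by auto
  have "r x \<noteq> r y" using r_inj xC assms(3) by blast
  then consider "r x < r y" | "r y < r x" by linarith
  then show ?thesis
  proof cases
    case 1 then show ?thesis using A2'[OF assms(1,2) _ assms(4)] by blast
  next
    case 2
    have "N i = {y, x}" using assms(2) by blast
    then show ?thesis using A2'[OF assms(1) _ 2 assms(4)] cadj_sym by blast
  qed
qed

lemma Acomp':
  assumes "i \<in> I" "x \<in> C" "y \<in> C" "N i = C - {x, y}" "r x < r y"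
  shows "cadj x y"
proof -
  have ry: "r y < n" using r_lt assms(3) by blast
  show ?thesis
  proof (cases "r y = r x + 1 \<or> (r x = 0 \<and> r y = n - 1)")
    case True then show ?thesis using cadj_succ cadj_wrap assms(2,3) by blast
  next
    case False
    then have lt: "r x + 1 < r y" using assms(5) by auto
    define z where "z = el (r x + 1)"
    have z: "z \<in> C" "r z = r x + 1" using el lt ry unfolding z_def by auto
    have "z \<noteq> x" "z \<noteq> y" using z lt by auto
    then have zN: "z \<in> N i" using z(1) assms(4) by simp
    have xn: "x \<notin> N i" "y \<notin> N i" using assms(4) by auto
    show ?thesis
    proof (cases "r x = 0")
      case False
      define t where "t = el 0"
      have t: "t \<in> C" "r t = 0" using el ry unfolding t_def by auto
      have "t \<noteq> x" "t \<noteq> y" using t False lt by auto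
      then have tN: "t \<in> N i" using t(1) assms(4) by simp
      have l1: "r t < r x" "r x < r z" using t z False by auto
      have "\<forall>s\<in>C. r s < r t \<or> r z < r s \<longrightarrow> s \<in> N i"
        using arc[OF assms(1) tN zN assms(2) xn(1) l1] by blast
      moreover have "r z < r y" using z lt by simp
      ultimately have "y \<in> N i" using assms(3) by blast
      then show ?thesis using xn by blast
    next
      case True
      then have ry2: "r y < n - 1" using False ry by auto
      define t where "t = el (n - 1)"
      have t: "t \<in> C" "r t = n - 1" using el ry unfolding t_def by auto
      have "t \<noteq> x" "t \<noteq> y" using t ry2 True by auto
      then have tN: "t \<in> N i" using t(1) assms(4) by simp
      have l1: "r z < r y" "r y < r t" using t z ry2 lt by auto
      have "\<forall>s\<in>C. r s < r z \<or> r t < r s \<longrightarrow> s \<in> N i"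
        using arc[OF assms(1) zN tN assms(3) xn(2) l1] by blast
      moreover have "r x < r z" using z by simp
      ultimately have "x \<in> N i" using assms(2) by blast
      then show ?thesis using xn by blast
    qed
  qed
qed

lemma Acomp:
  assumes "i \<in> I" "x \<in> C" "y \<in> C" "x \<noteq> y" "N i = C - {x, y}"
  shows "cadj x y"
proof -
  have "r x \<noteq> r y" using r_inj assms by blast
  then consider "r x < r y" | "r y < r x" by linarith
  then show ?thesis
  proof cases
    case 1 then show ?thesis using Acomp'[OF assms(1-3,5)] by blast
  next
    case 2
    have "N i = C - {y, x}" using assms(5) by blast
    then show ?thesis using Acomp'[OF assms(1,3,2) _ 2] cadj_sym by blast
  qed
qed

lemma copair':
  assumes "b1 \<in> I" "b2 \<in> I" "b1 \<noteq> b2" "x \<in> C" "y \<in> C"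
    "N b1 = C - {x}" "N b2 = C - {y}" "r x < r y"
  shows "cadj x y"
proof -
  have ry: "r y < n" using r_lt assms(5) by blast
  have xn: "x \<notin> N b1" "y \<notin> N b2" using assms(6,7) by auto
  show ?thesis
  proof (cases "r y = r x + 1 \<or> (r x = 0 \<and> r y = n - 1)")
    case True then show ?thesis using cadj_succ cadj_wrap assms(4,5) by blast
  next
    case nc: False
    then have lt: "r x + 1 < r y" using assms(8) by auto
    show ?thesis
    proof (cases "r x = 0")
      case False
      define m where "m = el (r x + 1)"
      have m: "m \<in> C" "r m = r x + 1" using el lt ry unfolding m_def by auto
      define z where "z = el 0"
      have z: "z \<in> C" "r z = 0" using el ry unfolding z_def by auto
      have ne: "m \<noteq> x" "m \<noteq> y" "z \<noteq> x" "z \<noteq> y" using m z lt False by auto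
      have mz: "m \<in> N b1" "z \<in> N b1" "m \<in> N b2" "z \<in> N b2" using assms(6,7) m(1) z(1) ne by simp_all
      have l1: "r z < r x" "r x < r m" using z m False by auto
      have o1: "B (Inl z) (Inr b1) \<and> B (Inr b1) (Inl m)"
        using arc[OF assms(1) mz(2) mz(1) assms(4) xn(1) l1] by blast
      have o2: "B (Inl z) (Inr b2) \<and> B (Inr b2) (Inl m)"
        using mix_cross[OF assms(1,2,3) mz(2) mz(1) mz(4) mz(3)] o1 by blast
      have "r m < r y" using m lt by simp
      then have "B (Inl m) (Inl y)" using r_iff[OF m(1) assms(5) ne(2)] by blast
      then have "y \<in> N b2" using D1'[OF assms(2) mz(4) mz(3) assms(5)] o2 ne(2) by blast
      then show ?thesis using xn by blast
    next
      case True
      then have ry2: "r y < n - 1" using nc ry by auto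
      define m where "m = el (r y - 1)"
      have m: "m \<in> C" "r m = r y - 1" using el lt ry unfolding m_def by auto
      define t where "t = el (n - 1)"
      have t: "t \<in> C" "r t = n - 1" using el ry unfolding t_def by auto
      have ne: "m \<noteq> x" "m \<noteq> y" "t \<noteq> x" "t \<noteq> y" using m t lt ry2 True by auto
      have mt: "m \<in> N b1" "t \<in> N b1" "m \<in> N b2" "t \<in> N b2" using assms(6,7) m(1) t(1) ne by simp_all
      have l1: "r m < r y" "r y < r t" using m t lt ry2 by auto
      have o1: "B (Inl m) (Inr b2) \<and> B (Inr b2) (Inl t)"
        using arc[OF assms(2) mt(3) mt(4) assms(5) xn(2) l1] by blast
      have o2: "B (Inl m) (Inr b1) \<and> B (Inr b1) (Inl t)"
        using mix_cross[OF assms(2,1) assms(3)[symmetric] mt(3) mt(4) mt(1) mt(2)] o1 by blast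
      have "r x < r m" using m lt True by simp
      then have "B (Inl x) (Inl m)" using r_iff[OF assms(4) m(1) ne(1)[symmetric]] by blast
      then have "x \<in> N b1" using D1[OF assms(1) mt(1) mt(2) assms(4)] o2 ne(1) by blast
      then show ?thesis using xn by blast
    qed
  qed
qed

lemma copair:
  assumes "b1 \<in> I" "b2 \<in> I" "b1 \<noteq> b2" "x \<in> C" "y \<in> C" "x \<noteq> y"
    "N b1 = C - {x}" "N b2 = C - {y}"
  shows "cadj x y"
proof -
  have "r x \<noteq> r y" using r_inj assms by blast
  then consider "r x < r y" | "r y < r x" by linarith
  then show ?thesis
  proof cases
    case 1 then show ?thesis using copair'[OF assms(1-5,7,8)] by blast
  next
    case 2
    then show ?thesis using copair'[OF assms(2,1) assms(3)[symmetric] assms(5,4,8,7) 2] cadj_sym by blast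
  qed
qed

lemma cadj_two:
  assumes "v \<in> C" "x \<in> C" "y \<in> C" "z \<in> C" "cadj x v" "cadj y v" "cadj z v"
  shows "x = y \<or> y = z \<or> x = z"
proof -
  have T: "(r a + 1) mod n = r v \<or> r a = (r v + 1) mod n" if "cadj a v" for a
    using that unfolding cadj_def by auto
  have U: "a = b" if "a \<in> C" "b \<in> C" "(r a + 1) mod n = r v" "(r b + 1) mod n = r v" for a b
  proof -
    have "r a = r b" using mod_suc_inj[of "r a" n "r b"] r_lt[OF that(1)] r_lt[OF that(2)] that(3,4) by simp
    then show ?thesis using r_inj that(1,2) by blast
  qed
  have V: "a = b" if "a \<in> C" "b \<in> C" "r a = (r v + 1) mod n" "r b = (r v + 1) mod n" for a b
    using that r_inj by simp
  show ?thesis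
  proof (cases "(r x + 1) mod n = r v")
    case cx: True
    show ?thesis
    proof (cases "(r y + 1) mod n = r v")
      case True then show ?thesis using U[OF assms(2,3) cx] by blast
    next
      case cy: False
      show ?thesis
      proof (cases "(r z + 1) mod n = r v")
        case True then show ?thesis using U[OF assms(2,4) cx] by blast
      next
        case False then show ?thesis using V[OF assms(3,4)] T[OF assms(6)] T[OF assms(7)] cy by blast
      qed
    qed
  next
    case cx: False
    then have rx: "r x = (r v + 1) mod n" using T[OF assms(5)] by blast
    show ?thesis
    proof (cases "(r y + 1) mod n = r v")
      case cy: True
      show ?thesis
      proof (cases "(r z + 1) mod n = r v")
        case True then show ?thesis using U[OF assms(3,4) cy] by blast
      next
        case False then show ?thesis using V[OF assms(2,4) rx] T[OF assms(7)] by blast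
      qed
    next
      case False then show ?thesis using V[OF assms(2,3) rx] T[OF assms(6)] by blast
    qed
  qed
qed

lemma cycle_contra:
  assumes "e \<in> C" "n \<ge> 2"
    and nb2: "\<And>v. v \<in> C \<Longrightarrow> v \<noteq> e \<Longrightarrow> \<exists>u w. u \<in> C \<and> w \<in> C \<and> u \<noteq> e \<and> w \<noteq> e \<and> u \<noteq> w \<and> cadj u v \<and> cadj w v"
  shows False
proof -
  have re: "r e < n" using r_lt assms(1) by blast
  define v where "v = el ((r e + 1) mod n)"
  have v: "v \<in> C" "r v = (r e + 1) mod n" using el assms(2) unfolding v_def by auto
  have "v \<noteq> e"
  proof
    assume "v = e"
    then have "(r e + 1) mod n = r e" using v by simp
    then show False using re assms(2) by (cases "r e + 1 = n") auto
  qed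
  then obtain u w where uw: "u \<in> C" "w \<in> C" "u \<noteq> e" "w \<noteq> e" "u \<noteq> w" "cadj u v" "cadj w v"
    using nb2 v(1) by blast
  have R: "r a = (r v + 1) mod n" if "a \<in> C" "a \<noteq> e" "cadj a v" for a
  proof -
    have "(r a + 1) mod n \<noteq> r v"
    proof
      assume "(r a + 1) mod n = r v"
      then have "r a = r e" using mod_suc_inj[of "r a" n "r e"] r_lt that(1) re v(2) by auto
      then show False using r_inj that(1,2) assms(1) by blast
    qed
    then show ?thesis using that(3) unfolding cadj_def by auto
  qed
  have "r u = r w" using R[of u] R[of w] uw by auto
  then show False using r_inj uw by blast
qed

end

context srep
begin

lemma rank3:
  assumes "t \<in> C" "p \<in> C" "q \<in> C" "s \<in> C" "r t \<noteq> r p" "r t \<noteq> r q" "r t \<noteq> r s"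
  shows "t \<notin> {p, q, s}"
  using assms by auto

lemma wit:
  assumes "N i = {p, q, s}" "cadj m a" "cadj m b" "{p,q,s} = {m,a,b}"
  shows "\<exists>m\<in>N i. \<forall>x\<in>N i. x \<noteq> m \<longrightarrow> cadj m x"
proof (rule bexI[of _ m])
  show "m \<in> N i" using assms(1,4) by simp
  show "\<forall>x\<in>N i. x \<noteq> m \<longrightarrow> cadj m x" using assms by auto
qed

lemma middle_sorted:
  assumes "i \<in> I" "N i = {p, q, s}" "r p < r q" "r q < r s"
  shows "\<exists>m\<in>N i. \<forall>x\<in>N i. x \<noteq> m \<longrightarrow> cadj m x"
proof -
  have C: "p \<in> C" "q \<in> C" "s \<in> C" using assms(1,2) NC by auto
  have rs: "r s < n" using r_lt C by blast
  have pN: "p \<in> N i" "q \<in> N i" "s \<in> N i" using assms(2) by auto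
  have nN: "t \<notin> N i" if "t \<in> C" "r t \<noteq> r p" "r t \<noteq> r q" "r t \<noteq> r s" for t
    using rank3[OF that(1) C that(2-4)] assms(2) by simp
  have el0: "el 0 \<in> C" "r (el 0) = 0" using el rs by auto
  have eln: "el (n - 1) \<in> C" "r (el (n - 1)) = n - 1" using el rs by auto
  show ?thesis
  proof (cases "r q = r p + 1 \<and> r s = r q + 1")
    case True
    have "cadj q p" "cadj q s" using cadj_succ[of p q] cadj_succ[of q s] C True cadj_sym by auto
    then show ?thesis using wit[OF assms(2)] by blast
  next
    case nc: False
    show ?thesis
    proof (cases "r q = r p + 1")
      case False
      then have lt: "r p + 1 < r q" using assms(3) by simp
      define z where "z = el (r p + 1)"
      have z: "z \<in> C" "r z = r p + 1" using el lt rs assms(4) unfolding z_def by auto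
      have zn: "z \<notin> N i" using nN[OF z(1)] z lt assms(4) by simp
      have l1: "r p < r z" "r z < r q" using z lt by auto
      have A: "\<forall>t\<in>C. r t < r p \<or> r q < r t \<longrightarrow> t \<in> N i"
        using arc[OF assms(1) pN(1) pN(2) z(1) zn l1] by blast
      have "r p = 0"
      proof (rule ccontr)
        assume h: "r p \<noteq> 0"
        then have "el 0 \<in> N i" using A el0 by simp
        moreover have "el 0 \<notin> N i" using nN[OF el0(1)] el0(2) h assms(3,4) by simp
        ultimately show False by blast
      qed
      moreover have "r s = r q + 1"
      proof (rule ccontr)
        assume h: "r s \<noteq> r q + 1"
        then have h2: "r q + 1 < r s" using assms(4) by simp
        then have t: "el (r q + 1) \<in> C" "r (el (r q + 1)) = r q + 1" using el rs by auto
        then have "el (r q + 1) \<in> N i" using A by simp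
        moreover have "el (r q + 1) \<notin> N i" using nN[OF t(1)] t(2) h2 assms(3,4) by simp
        ultimately show False by blast
      qed
      moreover have "r s = n - 1"
      proof (rule ccontr)
        assume h: "r s \<noteq> n - 1"
        then have h2: "r s < n - 1" using rs by simp
        then have "el (n - 1) \<in> N i" using A eln assms(4) by simp
        moreover have "el (n - 1) \<notin> N i" using nN[OF eln(1)] eln(2) h2 assms(3,4) by simp
        ultimately show False by blast
      qed
      ultimately have "cadj s q" "cadj s p" using cadj_succ[of q s] cadj_wrap[of p s] C cadj_sym by auto
      then show ?thesis using wit[OF assms(2)] by blast
    next
      case True
      then have lt: "r q + 1 < r s" using nc assms(4) by simp
      define z where "z = el (r q + 1)"
      have z: "z \<in> C" "r z = r q + 1" using el lt rs unfolding z_def by auto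
      have zn: "z \<notin> N i" using nN[OF z(1)] z lt assms(3) by simp
      have l1: "r q < r z" "r z < r s" using z lt by auto
      have A: "\<forall>t\<in>C. r t < r q \<or> r s < r t \<longrightarrow> t \<in> N i"
        using arc[OF assms(1) pN(2) pN(3) z(1) zn l1] by blast
      have "r p = 0"
      proof (rule ccontr)
        assume h: "r p \<noteq> 0"
        then have "el 0 \<in> N i" using A el0 assms(3) by simp
        moreover have "el 0 \<notin> N i" using nN[OF el0(1)] el0(2) h assms(3,4) by simp
        ultimately show False by blast
      qed
      moreover have "r s = n - 1"
      proof (rule ccontr)
        assume h: "r s \<noteq> n - 1"
        then have h2: "r s < n - 1" using rs by simp
        then have "el (n - 1) \<in> N i" using A eln by simp
        moreover have "el (n - 1) \<notin> N i" using nN[OF eln(1)] eln(2) h2 assms(3,4) by simp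
        ultimately show False by blast
      qed
      ultimately have "cadj p q" "cadj p s" using cadj_succ[of p q] cadj_wrap[of p s] C True by auto
      then show ?thesis using wit[OF assms(2)] by blast
    qed
  qed
qed

lemma middle:
  assumes "i \<in> I" "N i = {p, q, s}" "p \<noteq> q" "q \<noteq> s" "p \<noteq> s"
  shows "\<exists>m\<in>N i. \<forall>x\<in>N i. x \<noteq> m \<longrightarrow> cadj m x"
proof -
  have C: "p \<in> C" "q \<in> C" "s \<in> C" using assms(1,2) NC by auto
  have d: "r p \<noteq> r q" "r q \<noteq> r s" "r p \<noteq> r s" using r_inj C assms(3-5) by blast+
  have e1: "N i = {p,s,q}" "N i = {q,p,s}" "N i = {q,s,p}" "N i = {s,p,q}" "N i = {s,q,p}"
    using assms(2) by auto
  consider "r p < r q" "r q < r s" | "r p < r s" "r s < r q" | "r q < r p" "r p < r s"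
    | "r q < r s" "r s < r p" | "r s < r p" "r p < r q" | "r s < r q" "r q < r p"
    using d by linarith
  then show ?thesis
  proof cases
    case 1 then show ?thesis using middle_sorted[OF assms(1,2)] by blast
  next
    case 2 then show ?thesis using middle_sorted[OF assms(1) e1(1)] by blast
  next
    case 3 then show ?thesis using middle_sorted[OF assms(1) e1(2)] by blast
  next
    case 4 then show ?thesis using middle_sorted[OF assms(1) e1(3)] by blast
  next
    case 5 then show ?thesis using middle_sorted[OF assms(1) e1(4)] by blast
  next
    case 6 then show ?thesis using middle_sorted[OF assms(1) e1(5)] by blast
  qed
qed

lemma cyc:
  assumes "m \<ge> 3" "e \<in> C" "e \<notin> {1..m}" "C = insert e {1..m}"
    and succ: "\<And>i. 1 \<le> i \<Longrightarrow> i < m \<Longrightarrow> cadj i (i + 1)"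
    and wrap: "cadj 1 m"
  shows False
proof (rule cycle_contra[OF assms(2)])
  have "finite {1..m}" by simp
  then have "n = m + 1" using assms(3,4) by simp
  then show "n \<ge> 2" using assms(1) by simp
  fix v assume v: "v \<in> C" "v \<noteq> e"
  then have v1: "1 \<le> v" "v \<le> m" using assms(4) by auto
  define u where "u = (if v = 1 then m else v - 1)"
  define x where "x = (if v = m then 1 else v + 1)"
  have "u \<in> {1..m}" "x \<in> {1..m}" using v1 assms(1) unfolding u_def x_def by auto
  then have ux: "u \<in> C" "x \<in> C" "u \<noteq> e" "x \<noteq> e" using assms(3,4) by auto
  have "u \<noteq> x" using v1 assms(1) unfolding u_def x_def by auto
  moreover have "cadj u v"
  proof (cases "v = 1")
    case True then show ?thesis using wrap cadj_sym unfolding u_def by simp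
  next
    case False then show ?thesis using succ[of "v - 1"] v1 unfolding u_def by simp
  qed
  moreover have "cadj x v"
  proof (cases "v = m")
    case True then show ?thesis using wrap unfolding x_def by simp
  next
    case False then show ?thesis using succ[of v] v1 cadj_sym unfolding x_def by simp
  qed
  ultimately show "\<exists>u w. u \<in> C \<and> w \<in> C \<and> u \<noteq> e \<and> w \<noteq> e \<and> u \<noteq> w \<and> cadj u v \<and> cadj w v"
    using ux by blast
qed

end

lemma get_srep:
  assumes "finite C" "\<And>i. i \<in> I \<Longrightarrow> N i \<subseteq> C" "word_representable (split_graph C I N)"
  shows "\<exists>w. srep C I N w"
proof -
  obtain w where w: "set w = fst (split_graph C I N)"
    "\<forall>a\<in>fst (split_graph C I N). \<forall>b\<in>fst (split_graph C I N). a \<noteq> b \<longrightarrow> (snd (split_graph C I N) a b \<longleftrightarrow> alternate w a b)"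
    using assms(3) unfolding word_representable_def by blast
  have f: "fst (split_graph C I N) = Inl ` C \<union> Inr ` I" by (simp add: split_graph_def)
  have "srep C I N w"
    by (unfold_locales) (use assms(1,2) w f in auto)
  then show ?thesis by blast
qed

lemma osc_nwr:
  assumes k: "k \<ge> 3"
  shows "\<not> word_representable (odd_sun_center k)"
proof
  assume wr: "word_representable (odd_sun_center k)"
  have sub: "\<And>i. i \<in> {1..k} \<Longrightarrow> sun_nbr k i \<subseteq> {0..k}" by (auto simp: sun_nbr_def)
  have wr': "word_representable (split_graph {0..k} {1..k} (sun_nbr k))"
    using wr unfolding odd_sun_center_def .
  obtain w where "srep {0..k} {1..k} (sun_nbr k) w"
    using get_srep[OF finite_atLeastAtMost sub wr'] by blast
  then interpret S: srep "{0..k}" "{1..k}" "sun_nbr k" w .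
  have n: "S.n \<ge> 3" using k by simp
  have succ: "S.cadj i (i + 1)" if "1 \<le> i" "i < k" for i
  proof -
    have "sun_nbr k i = {i, i + 1}" using that by (simp add: sun_nbr_def)
    moreover have "i \<in> {1..k}" using that by simp
    ultimately show ?thesis using S.A2[of i i "i+1"] n by simp
  qed
  have wrap: "S.cadj 1 k"
  proof -
    have "sun_nbr k k = {1, k}" by (simp add: sun_nbr_def)
    moreover have "k \<in> {1..k}" "(1::nat) \<noteq> k" using k by auto
    ultimately show ?thesis using S.A2[of k 1 k] n by simp
  qed
  have c: "(0::nat) \<in> {0..k}" "(0::nat) \<notin> {1..k}" "{0..k} = insert (0::nat) {1..k}" by auto
  show False by (rule S.cyc[OF k c succ wrap])
qed


lemma m3_nwr:
  assumes k: "k \<ge> 4"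
  shows "\<not> word_representable (M_III k)"
proof
  assume wr: "word_representable (M_III k)"
  define N where "N = (\<lambda>i. if i \<le> k - 1 then {i, i+1} else {2..k-1} \<union> {k+1})"
  have sub: "\<And>i. i \<in> {1..k} \<Longrightarrow> N i \<subseteq> {1..k+1}" unfolding N_def by auto
  have wr': "word_representable (split_graph {1..k+1} {1..k} N)"
    using wr unfolding M_III_def N_def .
  obtain w where "srep {1..k+1} {1..k} N w"
    using get_srep[OF finite_atLeastAtMost sub wr'] by blast
  then interpret S: srep "{1..k+1}" "{1..k}" N w .
  have n: "S.n \<ge> 3" using k by simp
  have succ: "S.cadj i (i + 1)" if "1 \<le> i" "i < k" for i
  proof -
    have "N i = {i, i + 1}" using that unfolding N_def by simp
    moreover have "i \<in> {1..k}" using that by simp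
    ultimately show ?thesis using S.A2[of i i "i+1"] n by simp
  qed
  have wrap: "S.cadj 1 k"
  proof -
    have "N k = {1..k+1} - {1, k}" using k unfolding N_def by auto
    moreover have "k \<in> {1..k}" "(1::nat) \<in> {1..k+1}" "k \<in> {1..k+1}" "(1::nat) \<noteq> k" using k by auto
    ultimately show ?thesis using S.Acomp[of k 1 k] by blast
  qed
  have c: "k + 1 \<in> {1..k+1}" "k + 1 \<notin> {1..k}" "{1..k+1} = insert (k + 1) {1..k}" by auto
  have k3: "k \<ge> 3" using k by simp
  show False by (rule S.cyc[OF k3 c succ wrap])
qed

lemma m2_nwr:
  assumes k: "k \<ge> 4"
  shows "\<not> word_representable (M_II k)"
proof
  assume wr: "word_representable (M_II k)"
  define N where "N = (\<lambda>i. if i \<le> k - 2 then {i, i+1} else if i = k - 1 then {1..k-2} \<union> {k} else {2..k})"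
  have sub: "\<And>i. i \<in> {1..k} \<Longrightarrow> N i \<subseteq> {1..k}" unfolding N_def by auto
  have wr': "word_representable (split_graph {1..k} {1..k} N)"
    using wr unfolding M_II_def N_def .
  obtain w where "srep {1..k} {1..k} N w"
    using get_srep[OF finite_atLeastAtMost sub wr'] by blast
  then interpret S: srep "{1..k}" "{1..k}" N w .
  have n: "S.n \<ge> 3" using k by simp
  have succ: "S.cadj i (i + 1)" if "1 \<le> i" "i < k - 1" for i
  proof -
    have "N i = {i, i + 1}" using that unfolding N_def by simp
    moreover have "i \<in> {1..k}" using that by simp
    ultimately show ?thesis using S.A2[of i i "i+1"] n by simp
  qed
  have wrap: "S.cadj 1 (k - 1)"
  proof -
    have "N (k - 1) = {1..k} - {k - 1}" using k unfolding N_def by auto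
    moreover have "N k = {1..k} - {1}" using k unfolding N_def by auto
    moreover have "k - 1 \<in> {1..k}" "k \<in> {1..k}" "k - 1 \<noteq> k" "(1::nat) \<in> {1..k}" "k - 1 \<noteq> 1" using k by auto
    ultimately have "S.cadj (k - 1) 1" using S.copair[of "k - 1" k "k - 1" 1] by blast
    then show ?thesis using S.cadj_sym by blast
  qed
  have c: "k \<in> {1..k}" "k \<notin> {1..k-1}" "{1..k} = insert k {1..k-1}" using k by auto
  have k3: "k - 1 \<ge> 3" using k by simp
  show False by (rule S.cyc[OF k3 c succ wrap])
qed


context srep
begin

lemma cadj_par4: "n = 4 \<Longrightarrow> x \<in> C \<Longrightarrow> y \<in> C \<Longrightarrow> cadj x y \<Longrightarrow> odd (r x + r y)"
proof -
  assume a: "n = 4" "x \<in> C" "y \<in> C" "cadj x y"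
  have "r x < 4" "r y < 4" using r_lt a by auto
  moreover have "(r x + 1) mod 4 = r y \<or> (r y + 1) mod 4 = r x" using a(1,4) unfolding cadj_def by simp
  ultimately show ?thesis by presburger
qed

end

lemma k1t_nwr: "\<not> word_representable K1_tent"
proof
  assume wr: "word_representable K1_tent"
  define N where "N = (\<lambda>i::nat. if i = 1 then {1,2,4} else if i = 2 then {2,3,4} else {1,3,4::nat})"
  have sub: "\<And>i. i \<in> {1..3} \<Longrightarrow> N i \<subseteq> {1..4}" unfolding N_def by auto
  have wr': "word_representable (split_graph {1..4} {1..3} N)"
    using wr unfolding K1_tent_def N_def .
  obtain w where "srep {1..4} {1..3} N w"
    using get_srep[OF finite_atLeastAtMost sub wr'] by blast
  then interpret S: srep "{1..4}" "{1..3}" N w .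
  have N1: "N 1 = {1..4} - {3}" and N2: "N 2 = {1..4} - {1}" and N3: "N 3 = {1..4} - {2}"
    unfolding N_def by auto
  have m: "(1::nat) \<in> {1..3}" "(2::nat) \<in> {1..3}" "(3::nat) \<in> {1..3}"
    "(1::nat) \<in> {1..4}" "(2::nat) \<in> {1..4}" "(3::nat) \<in> {1..4}" by auto
  have a: "S.cadj 3 1" using S.copair[OF m(1) m(2) _ m(6) m(4) _ N1 N2] by simp
  have b: "S.cadj 1 2" using S.copair[OF m(2) m(3) _ m(4) m(5) _ N2 N3] by simp
  have c: "S.cadj 2 3" using S.copair[OF m(3) m(1) _ m(5) m(6) _ N3 N1] by simp
  have n4: "S.n = 4" by simp
  have "odd (S.r 3 + S.r 1)" "odd (S.r 1 + S.r 2)" "odd (S.r 2 + S.r 3)"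
    using S.cadj_par4[OF n4] a b c m by auto
  then show False by presburger
qed

lemma m33_nwr: "\<not> word_representable M_III3"
proof
  assume wr: "word_representable M_III3"
  define N where "N = (\<lambda>i::nat. {i, 4::nat})"
  have sub: "\<And>i. i \<in> {1..3} \<Longrightarrow> N i \<subseteq> {1..4}" unfolding N_def by auto
  have wr': "word_representable (split_graph {1..4} {1..3} N)"
    using wr unfolding M_III3_def N_def .
  obtain w where "srep {1..4} {1..3} N w"
    using get_srep[OF finite_atLeastAtMost sub wr'] by blast
  then interpret S: srep "{1..4}" "{1..3}" N w .
  have n: "S.n \<ge> 3" by simp
  have c: "S.cadj i 4" if "i \<in> {1..3}" for i
    using S.A2[OF that _ _ n, of i 4] that unfolding N_def by auto
  have "(1::nat) = 2 \<or> (2::nat) = 3 \<or> (1::nat) = 3"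
    by (rule S.cadj_two[of 4 1 2 3]) (use c in auto)
  then show False by simp
qed

lemma m4_nwr: "\<not> word_representable M_IV"
proof
  assume wr: "word_representable M_IV"
  define N where "N = (\<lambda>i::nat. if i = 1 then {1,2} else if i = 2 then {3,4} else if i = 3 then {5,6} else {2,4,6::nat})"
  have sub: "\<And>i. i \<in> {1..4} \<Longrightarrow> N i \<subseteq> {1..6}" unfolding N_def by auto
  have wr': "word_representable (split_graph {1..6} {1..4} N)"
    using wr unfolding M_IV_def N_def .
  obtain w where "srep {1..6} {1..4} N w"
    using get_srep[OF finite_atLeastAtMost sub wr'] by blast
  then interpret S: srep "{1..6}" "{1..4}" N w .
  have n: "S.n \<ge> 3" by simp
  have c12: "S.cadj 1 2" using S.A2[of 1 1 2] n unfolding N_def by simp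
  have c34: "S.cadj 3 4" using S.A2[of 2 3 4] n unfolding N_def by simp
  have c56: "S.cadj 5 6" using S.A2[of 3 5 6] n unfolding N_def by simp
  have N4: "N 4 = {2, 4, 6}" unfolding N_def by simp
  obtain m where m: "m \<in> N 4" "\<forall>x\<in>N 4. x \<noteq> m \<longrightarrow> S.cadj m x"
    using S.middle[of 4 2 4 6] N4 by auto
  have C: "x \<in> {1..6}" if "x \<in> {1,2,3,4,5,6}" for x :: nat using that by auto
  show False
  proof -
    consider "m = 2" | "m = 4" | "m = 6" using m(1) N4 by auto
    then show False
    proof cases
      case 1
      then have "S.cadj 4 2" "S.cadj 6 2" "S.cadj 1 2" using m(2) N4 S.cadj_sym c12 by auto
      then have "(4::nat) = 6 \<or> (6::nat) = 1 \<or> (4::nat) = 1" using S.cadj_two[of 2 4 6 1] C by auto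
      then show False by simp
    next
      case 2
      then have "S.cadj 2 4" "S.cadj 6 4" "S.cadj 3 4" using m(2) N4 S.cadj_sym c34 by auto
      then have "(2::nat) = 6 \<or> (6::nat) = 3 \<or> (2::nat) = 3" using S.cadj_two[of 4 2 6 3] C by auto
      then show False by simp
    next
      case 3
      then have "S.cadj 2 6" "S.cadj 4 6" "S.cadj 5 6" using m(2) N4 S.cadj_sym c56 by auto
      then have "(2::nat) = 4 \<or> (4::nat) = 5 \<or> (2::nat) = 5" using S.cadj_two[of 6 2 4 5] C by auto
      then show False by simp
    qed
  qed
qed


lemma m5_nwr: "\<not> word_representable M_V"
proof
  assume wr: "word_representable M_V"
  define N where "N = (\<lambda>i::nat. if i = 1 then {1,2} else if i = 2 then {3,4} else if i = 3 then {1,4,5} else {1,2,3,4::nat})"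
  have sub: "\<And>i. i \<in> {1..4} \<Longrightarrow> N i \<subseteq> {1..5}" unfolding N_def by auto
  have wr': "word_representable (split_graph {1..5} {1..4} N)"
    using wr unfolding M_V_def N_def .
  obtain w where "srep {1..5} {1..4} N w"
    using get_srep[OF finite_atLeastAtMost sub wr'] by blast
  then interpret S: srep "{1..5}" "{1..4}" N w .
  have n: "S.n \<ge> 3" and n5: "S.n = 5" by simp_all
  have c12: "S.cadj 1 2" using S.A2[of 1 1 2] n unfolding N_def by simp
  have c34: "S.cadj 3 4" using S.A2[of 2 3 4] n unfolding N_def by simp
  have N3: "N 3 = {1, 4, 5}" and N4: "N 4 = {1, 2, 3, 4}" unfolding N_def by simp_all
  have I: "(3::nat) \<in> {1..4}" "(4::nat) \<in> {1..4}" "(3::nat) \<noteq> 4" by auto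
  have C: "x \<in> {1..5}" if "x \<in> {1,2,3,4,5}" for x :: nat using that by auto
  obtain m where m: "m \<in> N 3" "\<forall>x\<in>N 3. x \<noteq> m \<longrightarrow> S.cadj m x"
    using S.middle[of 3 1 4 5] N3 by auto
  have m5: "m = 5"
  proof -
    consider "m = 1" | "m = 4" | "m = 5" using m(1) N3 by auto
    then show ?thesis
    proof cases
      case 1
      then have "S.cadj 4 1" "S.cadj 5 1" "S.cadj 2 1" using m(2) N3 S.cadj_sym c12 by auto
      then have "(4::nat) = 5 \<or> (5::nat) = 2 \<or> (4::nat) = 2" using S.cadj_two[of 1 4 5 2] C by auto
      then show ?thesis by simp
    next
      case 2
      then have "S.cadj 1 4" "S.cadj 5 4" "S.cadj 3 4" using m(2) N3 S.cadj_sym c34 by auto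
      then have "(1::nat) = 5 \<or> (5::nat) = 3 \<or> (1::nat) = 3" using S.cadj_two[of 4 1 5 3] C by auto
      then show ?thesis by simp
    qed
  qed
  have c51: "S.cadj 5 1" and c54: "S.cadj 5 4" using m(2) N3 m5 by auto
  define R where "R = S.r 5"
  have rl: "S.r x < 5" if "x \<in> {1,2,3,4,5}" for x using S.r_lt[OF C[OF that]] n5 by simp
  have r14: "S.r 1 \<noteq> S.r 4" using S.r_inj[of 1 4] C by auto
  have e1: "(R + 1) mod 5 = S.r 1 \<or> (S.r 1 + 1) mod 5 = R" using c51 n5 unfolding S.cadj_def R_def by simp
  have e4: "(R + 1) mod 5 = S.r 4 \<or> (S.r 4 + 1) mod 5 = R" using c54 n5 unfolding S.cadj_def R_def by simp
  have R5: "R < 5" using rl[of 5] unfolding R_def by simp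
  have r1: "S.r 1 < 5" and r4: "S.r 4 < 5" using rl by auto
  have md: "(a + 1) mod 5 = (if a = 4 then 0 else a + 1)" if "a < 5" for a :: nat
    using that by (cases "a = 4") auto
  have e1': "(if R = 4 then 0 else R + 1) = S.r 1 \<or> (if S.r 1 = 4 then 0 else S.r 1 + 1) = R"
    using e1 md[OF R5] md[OF r1] by simp
  have e4': "(if R = 4 then 0 else R + 1) = S.r 4 \<or> (if S.r 4 = 4 then 0 else S.r 4 + 1) = R"
    using e4 md[OF R5] md[OF r4] by simp
  have N3m: "x \<in> N 3 \<longleftrightarrow> x = 1 \<or> x = 4 \<or> x = 5" for x using N3 by auto
  have N4m: "x \<in> N 4 \<longleftrightarrow> x = 1 \<or> x = 2 \<or> x = 3 \<or> x = 4" for x using N4 by auto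
  \<comment> \<open>the two cyclic neighbours of 5, ordered by rank\<close>
  obtain u v where uv: "u \<in> {1, 4}" "v \<in> {1, 4}" "S.r u < S.r v"
    "(0 < R \<and> R < 4 \<and> S.r u + 1 = R \<and> S.r v = R + 1) \<or> (R = 0 \<and> S.r u = 1 \<and> S.r v = 4)
       \<or> (R = 4 \<and> S.r u = 0 \<and> S.r v = 3)"
  proof (cases "S.r 1 < S.r 4")
    case True
    have "(0 < R \<and> R < 4 \<and> S.r 1 + 1 = R \<and> S.r 4 = R + 1) \<or> (R = 0 \<and> S.r 1 = 1 \<and> S.r 4 = 4)
       \<or> (R = 4 \<and> S.r 1 = 0 \<and> S.r 4 = 3)" using e1' e4' R5 r1 r4 r14 True by (simp split: if_splits; arith)
    then show ?thesis using that[of 1 4] True by auto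
  next
    case False
    then have F: "S.r 4 < S.r 1" using r14 by simp
    have "(0 < R \<and> R < 4 \<and> S.r 4 + 1 = R \<and> S.r 1 = R + 1) \<or> (R = 0 \<and> S.r 4 = 1 \<and> S.r 1 = 4)
       \<or> (R = 4 \<and> S.r 4 = 0 \<and> S.r 1 = 3)" using e1' e4' R5 r1 r4 r14 F by (simp split: if_splits; arith)
    then show ?thesis using that[of 4 1] F by auto
  qed
  have uC: "u \<in> {1..5}" "v \<in> {1..5}" using uv by auto
  have uvne: "u \<noteq> v" using uv(3) by auto
  have uvs: "x = u \<or> x = v" if "x = 1 \<or> x = 4" for x :: nat using uv(1,2) uvne that by auto
  have uN: "u \<in> N 3" "v \<in> N 3" "u \<in> N 4" "v \<in> N 4" using uv(1,2) N3 N4 by auto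
  have u5: "u \<noteq> 5" "v \<noteq> 5" using uv(1,2) by auto
  have f5: "(5::nat) \<in> {1..5}" "(5::nat) \<notin> N 4" using N4 by auto
  have el: "S.el t \<in> {1..5} \<and> S.r (S.el t) = t" if "t < 5" for t using S.el[of t] that n5 by simp
  have notN3: "x \<notin> N 3" if "x \<in> {1..5}" "S.r x \<noteq> S.r u" "S.r x \<noteq> S.r v" "S.r x \<noteq> R" for x
  proof
    assume "x \<in> N 3"
    then have "x = u \<or> x = v \<or> x = 5" using uvs N3m by blast
    then show False using that unfolding R_def by auto
  qed
  consider "0 < R" "R < 4" "S.r u + 1 = R" "S.r v = R + 1" | "R = 0" "S.r u = 1" "S.r v = 4"
    | "R = 4" "S.r u = 0" "S.r v = 3" using uv(4) by auto
  then show False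
  proof cases
    case 1
    have l: "S.r u < S.r 5" "S.r 5 < S.r v" using 1 unfolding R_def by auto
    have o4: "S.B (Inl u) (Inr 4) \<and> S.B (Inr 4) (Inl v)"
      using S.arc[OF I(2) uN(3) uN(4) f5 l] by blast
    have o3: "S.B (Inl u) (Inr 3) \<and> S.B (Inr 3) (Inl v)"
      using S.mix_cross[OF I(2) I(1) I(3)[symmetric] uN(3) uN(4) uN(1) uN(2)] o4 by blast
    show False
    proof (cases "R \<ge> 2")
      case True
      have t: "S.el 0 \<in> {1..5}" "S.r (S.el 0) = 0" using el[of 0] by auto
      have ne: "S.el 0 \<noteq> u" using t 1 True by auto
      have "S.B (Inl (S.el 0)) (Inl u)" using S.r_iff[OF t(1) uC(1) ne] t 1 True by simp
      then have "S.el 0 \<in> N 3" using S.D1[OF I(1) uN(1) uN(2) t(1)] o3 ne by blast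
      moreover have "S.el 0 \<notin> N 3" using notN3[OF t(1)] t 1 True by simp
      ultimately show False by blast
    next
      case False
      have t: "S.el 4 \<in> {1..5}" "S.r (S.el 4) = 4" using el[of 4] by auto
      have ne: "S.el 4 \<noteq> v" using t 1 False by auto
      have "S.B (Inl v) (Inl (S.el 4))" using S.r_iff[OF uC(2) t(1) ne[symmetric]] t 1 False by simp
      then have "S.el 4 \<in> N 3" using S.D1'[OF I(1) uN(1) uN(2) t(1)] o3 ne by blast
      moreover have "S.el 4 \<notin> N 3" using notN3[OF t(1)] t 1 False by simp
      ultimately show False by blast
    qed
  next
    case 2
    have z: "S.el 2 \<in> {1..5}" "S.r (S.el 2) = 2" using el[of 2] by auto
    have zn: "S.el 2 \<notin> N 3" using notN3[OF z(1)] z 2 by simp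
    have l: "S.r u < S.r (S.el 2)" "S.r (S.el 2) < S.r v" using z 2 by auto
    have o3: "S.B (Inl u) (Inr 3) \<and> S.B (Inr 3) (Inl v)"
      using S.arc[OF I(1) uN(1) uN(2) z(1) zn l] by blast
    have o4: "S.B (Inl u) (Inr 4) \<and> S.B (Inr 4) (Inl v)"
      using S.mix_cross[OF I(1) I(2) I(3) uN(1) uN(2) uN(3) uN(4)] o3 by blast
    have "S.B (Inl 5) (Inl u)" using S.r_iff[OF f5(1) uC(1) u5(1)[symmetric]] 2 unfolding R_def by simp
    then have "5 \<in> N 4" using S.D1[OF I(2) uN(3) uN(4) f5(1)] o4 u5 by blast
    then show False using f5 by blast
  next
    case 3
    have z: "S.el 1 \<in> {1..5}" "S.r (S.el 1) = 1" using el[of 1] by auto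
    have zn: "S.el 1 \<notin> N 3" using notN3[OF z(1)] z 3 by simp
    have l: "S.r u < S.r (S.el 1)" "S.r (S.el 1) < S.r v" using z 3 by auto
    have o3: "S.B (Inl u) (Inr 3) \<and> S.B (Inr 3) (Inl v)"
      using S.arc[OF I(1) uN(1) uN(2) z(1) zn l] by blast
    have o4: "S.B (Inl u) (Inr 4) \<and> S.B (Inr 4) (Inl v)"
      using S.mix_cross[OF I(1) I(2) I(3) uN(1) uN(2) uN(3) uN(4)] o3 by blast
    have "S.B (Inl v) (Inl 5)" using S.r_iff[OF uC(2) f5(1) u5(2)] 3 unfolding R_def by simp
    then have "5 \<in> N 4" using S.D1'[OF I(2) uN(3) uN(4) f5(1)] o4 u5 by blast
    then show False using f5 by blast
  qed
qed

theorem lemma15: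
  shows "word_representable F0
    \<and> (\<forall>k. k \<ge> 4 \<and> even k \<longrightarrow> word_representable (even_sun k))
    \<and> (\<forall>k. k \<ge> 5 \<and> odd k \<longrightarrow> word_representable (F1 k) \<and> word_representable (F2 k))
    \<and> (\<forall>k. k \<ge> 3 \<and> odd k \<longrightarrow> \<not> word_representable (odd_sun_center k))
    \<and> \<not> word_representable K1_tent
    \<and> (\<forall>k. k \<ge> 4 \<and> even k \<longrightarrow> \<not> word_representable (M_II k))
    \<and> \<not> word_representable M_III3
    \<and> (\<forall>k. k \<ge> 4 \<and> even k \<longrightarrow> \<not> word_representable (M_III k))
    \<and> \<not> word_representable M_IV
    \<and> \<not> word_representable M_V"
proof -
  have a: "\<forall>k. k \<ge> 4 \<and> even k \<longrightarrow> word_representable (even_sun k)"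
    using esun_wr by simp
  have b: "\<forall>k. k \<ge> 5 \<and> odd k \<longrightarrow> word_representable (F1 k) \<and> word_representable (F2 k)"
    using f1_wr f2_wr by simp
  have c: "\<forall>k. k \<ge> 3 \<and> odd k \<longrightarrow> \<not> word_representable (odd_sun_center k)"
    using osc_nwr by simp
  have d: "\<forall>k. k \<ge> 4 \<and> even k \<longrightarrow> \<not> word_representable (M_II k)"
    using m2_nwr by simp
  have e: "\<forall>k. k \<ge> 4 \<and> even k \<longrightarrow> \<not> word_representable (M_III k)"
    using m3_nwr by simp
  show ?thesis using f0_wr a b c k1t_nwr d m33_nwr e m4_nwr m5_nwr by blast
qed

end
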